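(* Let $K\ge1$ and $\alpha\in(0,1)$. (i) Let $(E_1,\dots,E_K)$ be arbitrarily dependent e-values (nonnegative, with $\mathbb E[E_i]\le1$ for each true null $i$), let $F_1,\dots,F_K$ be arbitrary nonnegative proxies, $\mathfrak S_E:[0,\infty)^K\to2^{[K]}$ a selection map, $\mathcal S=\mathfrak S_E(F_1,\dots,F_K)$, and $\mathcal R^{\mathrm{ePF}}$ the output of e-BH at level $\alpha$ applied to $(E_i\mathbf 1\{i\in\mathcal S\})_{i\in[K]}$. Then $\mathrm{FDR}(\mathcal R^{\mathrm{ePF}})\le\alpha$. (ii) Let $(P_1,\dots,P_K)$ be p-values, valid (superuniform) for each true null, let $Q_1,\dots,Q_K$ be arbitrary $[0,1]$-valued proxies, $\mathfrak S_P:[0,1]^K\to2^{[K]}$ a selection map, $\mathcal S=\mathfrak S_P(Q_1,\dots,Q_K)$, and $\mathcal R^{\mathrm{PF}}$ the output of BH at level $\alpha$ applied to $(P_i\vee\mathbf 1\{i\notin\mathcal S\})_{i\in[K]}$. Then $$\mathrm{FDR}(\mathcal R^{\mathrm{PF}})\le\begin{cases}\alpha(1+\log(\alpha^{-1})) & \text{if } (P_i) \text{ are independent or PRDN},\\ \alpha(3.18+\log(\alpha^{-1})) & \text{if } (P_i) \text{ are WNDN},\\ \alpha\,\ell_K & \text{under arbitrary dependence},\end{cases}$$ with $\ell_K=\sum_{k=1}^K1/k$.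
   Context: BH at level $\alpha$: with $P_{(i)}$ the $i$-th smallest input, $k=\max\{i:P_{(i)}\le\alpha i/K\}$, reject $\{i:P_i\le\alpha k/K\}$. e-BH at level $\alpha$: with $E_{[i]}$ the $i$-th largest input, $k=\max\{i:E_{[i]}\ge K/(\alpha i)\}$, reject $\{i:E_i\ge K/(\alpha k)\}$. $\mathrm{FDR}(\mathcal R)=\mathbb E[|\mathcal N\cap\mathcal R|/(|\mathcal R|\vee1)]$, $\mathcal N$ the set of true nulls. A set $D\subseteq\mathbb R^K$ is increasing if $x\in D$, $y\ge x$ componentwise imply $y\in D$. PRDN: for every increasing $D$ and $k\in\mathcal N$, $\Pr((P_1,\dots,P_K)\in D\mid P_k\le x)$ is nondecreasing in $x$. WNDN: for every $A\subseteq\mathcal N$ and $s\in[0,1]$, $\Pr(\bigcap_{i\in A}\{P_i\le s\})\le\prod_{i\in A}\Pr(P_i\le s)$. *)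

theory Defs
  imports "HOL-Probability.Probability"
begin

text \<open>Hypotheses are indexed by a finite type 'n, so K = CARD('n) \<ge> 1.\<close>

definition ith_smallest :: "('n::finite \<Rightarrow> real) \<Rightarrow> nat \<Rightarrow> real" where
  "ith_smallest p i = sorted_list_of_multiset (image_mset p (mset_set UNIV)) ! (i - 1)"

definition ith_largest :: "('n::finite \<Rightarrow> real) \<Rightarrow> nat \<Rightarrow> real" where
  "ith_largest e i = rev (sorted_list_of_multiset (image_mset e (mset_set UNIV))) ! (i - 1)"

definition BH :: "real \<Rightarrow> ('n::finite \<Rightarrow> real) \<Rightarrow> 'n set" where
  "BH \<alpha> p = (let K = CARD('n);
      k = Max ({0} \<union> {i \<in> {1..K}. ith_smallest p i \<le> \<alpha> * real i / real K})
    in if k = 0 then {} else {j. p j \<le> \<alpha> * real k / real K})"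

definition eBH :: "real \<Rightarrow> ('n::finite \<Rightarrow> real) \<Rightarrow> 'n set" where
  "eBH \<alpha> e = (let K = CARD('n);
      k = Max ({0} \<union> {i \<in> {1..K}. ith_largest e i \<ge> real K / (\<alpha> * real i)})
    in if k = 0 then {} else {j. e j \<ge> real K / (\<alpha> * real k)})"

definition FDR :: "'a measure \<Rightarrow> 'n set \<Rightarrow> ('a \<Rightarrow> 'n set) \<Rightarrow> real" where
  "FDR M N R = (\<integral>\<omega>. real (card (N \<inter> R \<omega>)) / real (max (card (R \<omega>)) 1) \<partial>M)"

definition increasing_set :: "('n \<Rightarrow> real) set \<Rightarrow> bool" where
  "increasing_set D \<longleftrightarrow> (\<forall>x y. x \<in> D \<longrightarrow> (\<forall>i. x i \<le> y i) \<longrightarrow> y \<in> D)"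

text \<open>PRDN (positive regression dependence on the subset of nulls).
  Conditional probabilities are taken where the conditioning event has positive probability.\<close>
definition PRDN :: "'a measure \<Rightarrow> 'n set \<Rightarrow> ('n \<Rightarrow> 'a \<Rightarrow> real) \<Rightarrow> bool" where
  "PRDN M N P \<longleftrightarrow>
    (\<forall>D k x y. D \<in> sets (Pi\<^sub>M UNIV (\<lambda>_. borel)) \<longrightarrow> increasing_set D \<longrightarrow> k \<in> N \<longrightarrow>
       x \<le> y \<longrightarrow> measure M {\<omega> \<in> space M. P k \<omega> \<le> x} > 0 \<longrightarrow>
       measure M {\<omega> \<in> space M. (\<lambda>i. P i \<omega>) \<in> D \<and> P k \<omega> \<le> x} / measure M {\<omega> \<in> space M. P k \<omega> \<le> x}
       \<le> measure M {\<omega> \<in> space M. (\<lambda>i. P i \<omega>) \<in> D \<and> P k \<omega> \<le> y} / measure M {\<omega> \<in> space M. P k \<omega> \<le> y})"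

definition WNDN :: "'a measure \<Rightarrow> 'n set \<Rightarrow> ('n \<Rightarrow> 'a \<Rightarrow> real) \<Rightarrow> bool" where
  "WNDN M N P \<longleftrightarrow>
    (\<forall>A s. A \<subseteq> N \<longrightarrow> 0 \<le> s \<longrightarrow> s \<le> 1 \<longrightarrow>
       measure M {\<omega> \<in> space M. \<forall>i\<in>A. P i \<omega> \<le> s} \<le> (\<Prod>i\<in>A. measure M {\<omega> \<in> space M. P i \<omega> \<le> s}))"

end

theory Submission
  imports Defs
begin
lemma ith_smallest_card:
  fixes p :: "'n::finite \<Rightarrow> real"
  assumes i: "1 \<le> i" "i \<le> CARD('n)" and le: "ith_smallest p i \<le> c"
  shows "i \<le> card {j. p j \<le> c}"
proof -
  define xs where "xs = sorted_list_of_multiset (image_mset p (mset_set (UNIV::'n set)))"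
  have s: "sorted xs" and m: "mset xs = image_mset p (mset_set UNIV)"
    by (simp_all add: xs_def)
  have len: "length xs = CARD('n)"
    by (metis m size_image_mset size_mset size_mset_set)
  have "\<forall>x\<in>set (take i xs). x \<le> c"
  proof
    fix x assume "x \<in> set (take i xs)"
    then obtain l where l: "l < length (take i xs)" "x = take i xs ! l" by (metis in_set_conv_nth)
    then have "x = xs ! l" "l \<le> i - 1" using i len by auto
    then have "x \<le> xs ! (i - 1)" using s sorted_nth_mono i len by (metis diff_less less_le_trans zero_less_one)
    also have "\<dots> \<le> c" using le by (simp add: ith_smallest_def xs_def)
    finally show "x \<le> c" .
  qed
  then have "filter (\<lambda>x. x \<le> c) (take i xs) = take i xs" by simp
  then have "i = length (filter (\<lambda>x. x \<le> c) (take i xs))" using i len by simp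
  also have "\<dots> \<le> length (filter (\<lambda>x. x \<le> c) xs)"
    by (metis append_take_drop_id filter_append length_append le_add1)
  also have "\<dots> = size (filter_mset (\<lambda>x. x \<le> c) (mset xs))"
    by (metis mset_filter size_mset)
  also have "\<dots> = size (image_mset p (filter_mset (\<lambda>j. p j \<le> c) (mset_set UNIV)))"
    by (simp add: m filter_mset_image_mset)
  also have "\<dots> = card {j. p j \<le> c}"
    by simp
  finally show ?thesis .
qed

lemma ith_largest_card:
  fixes e :: "'n::finite \<Rightarrow> real"
  assumes i: "1 \<le> i" "i \<le> CARD('n)" and le: "ith_largest e i \<ge> c"
  shows "i \<le> card {j. e j \<ge> c}"
proof -
  define xs where "xs = sorted_list_of_multiset (image_mset e (mset_set (UNIV::'n set)))"
  have s: "sorted xs" and m: "mset xs = image_mset e (mset_set UNIV)"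
    by (simp_all add: xs_def)
  have len: "length xs = CARD('n)"
    by (metis m size_image_mset size_mset size_mset_set)
  have "\<forall>x\<in>set (take i (rev xs)). x \<ge> c"
  proof
    fix x assume "x \<in> set (take i (rev xs))"
    then obtain l where l: "l < length (take i (rev xs))" "x = take i (rev xs) ! l" by (metis in_set_conv_nth)
    then have "x = rev xs ! l" "l \<le> i - 1" using i len by auto
    then have x: "x = xs ! (length xs - Suc l)" using l len i by (simp add: rev_nth)
    have "rev xs ! (i - 1) = xs ! (length xs - i)" using i len by (simp add: rev_nth Suc_diff_Suc)
    moreover have "xs ! (length xs - i) \<le> xs ! (length xs - Suc l)"
      using s \<open>l \<le> i - 1\<close> i len by (intro sorted_nth_mono) auto
    ultimately have "rev xs ! (i - 1) \<le> x" using x by simp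
    moreover have "c \<le> rev xs ! (i - 1)" using le by (simp add: ith_largest_def xs_def)
    ultimately show "c \<le> x" by simp
  qed
  then have "filter (\<lambda>x. x \<ge> c) (take i (rev xs)) = take i (rev xs)" by simp
  then have "i = length (filter (\<lambda>x. x \<ge> c) (take i (rev xs)))" using i len by simp
  also have "\<dots> \<le> length (filter (\<lambda>x. x \<ge> c) (rev xs))"
    by (metis append_take_drop_id filter_append length_append le_add1)
  also have "\<dots> = size (filter_mset (\<lambda>x. x \<ge> c) (mset xs))"
    by (metis mset_filter size_mset mset_rev)
  also have "\<dots> = size (image_mset e (filter_mset (\<lambda>j. e j \<ge> c) (mset_set UNIV)))"
    by (simp add: m filter_mset_image_mset)
  also have "\<dots> = card {j. e j \<ge> c}"
    by simp
  finally show ?thesis .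
qed

lemma Max_nonzero_mem:
  assumes "Max ({0::nat} \<union> {i \<in> {1..K}. Q i}) = k" "k \<noteq> 0"
  shows "k \<in> {1..K} \<and> Q k"
proof -
  have fin: "finite ({0::nat} \<union> {i \<in> {1..K}. Q i})" by auto
  have "k \<in> {0::nat} \<union> {i \<in> {1..K}. Q i}" using Max_in[OF fin] assms(1) by blast
  then show ?thesis using assms(2) by auto
qed

lemma eBH_pointwise:
  fixes e :: "'n::finite \<Rightarrow> real"
  assumes a: "0 < \<alpha>" and e: "\<And>i. 0 \<le> e i"
  shows "real (card (N \<inter> eBH \<alpha> e)) / real (max (card (eBH \<alpha> e)) 1) \<le> (\<Sum>j\<in>N. \<alpha> * e j / real CARD('n))"
proof -
  define K where "K = CARD('n)"
  have K0: "K > 0" by (simp add: K_def)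
  define k where "k = Max ({0} \<union> {i \<in> {1..K}. ith_largest e i \<ge> real K / (\<alpha> * real i)})"
  have R: "eBH \<alpha> e = (if k = 0 then {} else {j. e j \<ge> real K / (\<alpha> * real k)})"
    by (simp add: eBH_def K_def k_def Let_def)
  have rhs: "0 \<le> (\<Sum>j\<in>N. \<alpha> * e j / real K)" using a e by (intro sum_nonneg) auto
  show ?thesis
  proof (cases "k = 0")
    case True
    then show ?thesis using R rhs K_def by simp
  next
    case False
    from Max_nonzero_mem[OF k_def[symmetric] False]
    have k: "1 \<le> k" "k \<le> K" "ith_largest e k \<ge> real K / (\<alpha> * real k)" by auto
    define R where "R = {j. e j \<ge> real K / (\<alpha> * real k)}"
    have Req: "eBH \<alpha> e = R" using R False R_def by simp
    have cR: "k \<le> card R" unfolding R_def using ith_largest_card[OF k(1) k(2)[unfolded K_def] k(3)[unfolded K_def]] K_def by simp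
    have each: "1 / real k \<le> \<alpha> * e j / real K" if "j \<in> R" for j
    proof -
      have "real K / (\<alpha> * real k) \<le> e j" using that R_def by simp
      then show ?thesis using a k K0 by (simp add: field_simps)
    qed
    have "real (card (N \<inter> R)) / real (max (card R) 1) \<le> real (card (N \<inter> R)) / real k"
      using cR k by (intro divide_left_mono) auto
    also have "\<dots> = (\<Sum>j\<in>N \<inter> R. 1 / real k)" by simp
    also have "\<dots> \<le> (\<Sum>j\<in>N \<inter> R. \<alpha> * e j / real K)" using each by (intro sum_mono) auto
    also have "\<dots> \<le> (\<Sum>j\<in>N. \<alpha> * e j / real K)" using a e K0 by (intro sum_mono2) auto
    finally show ?thesis using Req K_def by simp
  qed
qed

definition Wf :: "real \<Rightarrow> 'n set \<Rightarrow> ('n::finite \<Rightarrow> real) \<Rightarrow> real" where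
  "Wf \<alpha> N P = Max ((\<lambda>r. min 1 (real (card {j\<in>N. P j \<le> \<alpha> * real r / real CARD('n)}) / real r)) ` {1..CARD('n)})"

lemma Wf_ge:
  fixes P :: "'n::finite \<Rightarrow> real"
  assumes "r \<in> {1..CARD('n)}"
  shows "min 1 (real (card {j\<in>N. P j \<le> \<alpha> * real r / real CARD('n)}) / real r) \<le> Wf \<alpha> N P"
  unfolding Wf_def using assms by (intro Max_ge) auto

lemma BH_pointwise:
  fixes p P :: "'n::finite \<Rightarrow> real"
  assumes a: "0 < \<alpha>" and pP: "\<And>i. P i \<le> p i"
  shows "real (card (N \<inter> BH \<alpha> p)) / real (max (card (BH \<alpha> p)) 1) \<le> Wf \<alpha> N P"
proof -
  define K where "K = CARD('n)"
  have K0: "K > 0" by (simp add: K_def)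
  define k where "k = Max ({0} \<union> {i \<in> {1..K}. ith_smallest p i \<le> \<alpha> * real i / real K})"
  have R: "BH \<alpha> p = (if k = 0 then {} else {j. p j \<le> \<alpha> * real k / real K})"
    by (simp add: BH_def K_def k_def Let_def)
  have W0: "0 \<le> Wf \<alpha> N P"
  proof -
    have "1 \<in> {1..CARD('n)}" using K0 K_def by auto
    from Wf_ge[OF this, of N P \<alpha>] show ?thesis by (simp add: min_def split: if_splits)
  qed
  show ?thesis
  proof (cases "k = 0")
    case True
    then show ?thesis using R W0 by simp
  next
    case False
    from Max_nonzero_mem[OF k_def[symmetric] False]
    have k: "1 \<le> k" "k \<le> K" "ith_smallest p k \<le> \<alpha> * real k / real K" by auto
    define R where "R = {j. p j \<le> \<alpha> * real k / real K}"
    have Req: "BH \<alpha> p = R" using R False R_def by simp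
    have cR: "k \<le> card R" unfolding R_def using ith_smallest_card[OF k(1) k(2)[unfolded K_def] k(3)[unfolded K_def]] K_def by simp
    have sub: "N \<inter> R \<subseteq> {j\<in>N. P j \<le> \<alpha> * real k / real K}" using pP R_def by (auto intro: order_trans)
    have c1: "card (N \<inter> R) \<le> card {j\<in>N. P j \<le> \<alpha> * real k / real K}" by (intro card_mono[OF _ sub]) auto
    have c2: "card (N \<inter> R) \<le> card R" by (intro card_mono) auto
    have "real (card (N \<inter> R)) / real (max (card R) 1) \<le> min 1 (real (card {j\<in>N. P j \<le> \<alpha> * real k / real K}) / real k)"
    proof (rule min.boundedI)
      show "real (card (N \<inter> R)) / real (max (card R) 1) \<le> 1" using c2 by (auto simp: divide_le_eq_1 max_def)
      have "real (card (N \<inter> R)) / real (max (card R) 1) \<le> real (card (N \<inter> R)) / real k"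
        using cR k by (intro divide_left_mono) auto
      also have "\<dots> \<le> real (card {j\<in>N. P j \<le> \<alpha> * real k / real K}) / real k"
        using c1 by (intro divide_right_mono) auto
      finally show "real (card (N \<inter> R)) / real (max (card R) 1) \<le> real (card {j\<in>N. P j \<le> \<alpha> * real k / real K}) / real k" .
    qed
    also have "\<dots> \<le> Wf \<alpha> N P" using Wf_ge[of k N P \<alpha>] k K_def by auto
    finally show ?thesis using Req by simp
  qed
qed

lemma card_le_floor:
  assumes "0 \<le> x" "x \<le> real m"
  shows "real (card {i\<in>{..<m}. real (Suc i) \<le> x}) \<ge> x - 1"
proof -
  have "{i\<in>{..<m}. real (Suc i) \<le> x} = {..<nat \<lfloor>x\<rfloor>}"
  proof safe
    fix i assume "i < m" "real (Suc i) \<le> x"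
    then show "i < nat \<lfloor>x\<rfloor>" by linarith
  next
    fix i assume "i < nat \<lfloor>x\<rfloor>"
    then have "real i < x" using assms by linarith
    then show "i < m" using assms by linarith
  next
    fix i assume "i < nat \<lfloor>x\<rfloor>"
    then show "real (Suc i) \<le> x" by linarith
  qed
  then show ?thesis using assms by simp
qed

lemma (in prob_space) expectation_bound_H:
  fixes W :: "'a \<Rightarrow> real" and H :: "real \<Rightarrow> real"
  assumes Wm: "W \<in> borel_measurable M" and W01: "\<And>\<omega>. \<omega> \<in> space M \<Longrightarrow> 0 \<le> W \<omega> \<and> W \<omega> \<le> 1"
    and H: "\<And>a b. 0 \<le> a \<Longrightarrow> a < b \<Longrightarrow> b \<le> 1 \<Longrightarrow> (b - a) * prob {\<omega>\<in>space M. W \<omega> \<ge> b} \<le> H b - H a"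
  shows "expectation W \<le> H 1 - H 0"
proof (rule field_le_epsilon)
  fix e :: real assume e: "0 < e"
  obtain m :: nat where m: "1 / e < real m" using reals_Archimedean2 by blast
  have m0: "m > 0" using m e by (metis divide_pos_pos less_trans of_nat_0_less_iff zero_less_one)
  define A where "A i = {\<omega>\<in>space M. W \<omega> \<ge> real (Suc i) / real m}" for i
  have Asets: "A i \<in> sets M" for i unfolding A_def using Wm by measurable
  have pw: "W \<omega> \<le> 1 / real m + (\<Sum>i<m. (1 / real m) * indicator (A i) \<omega>)" if \<omega>: "\<omega> \<in> space M" for \<omega>
  proof -
    have "(\<Sum>i<m. indicator (A i) \<omega> :: real) = (\<Sum>i\<in>{i\<in>{..<m}. real (Suc i) \<le> real m * W \<omega>}. 1)"
      unfolding A_def using \<omega> m0 by (intro sum.mono_neutral_cong_right) (auto simp: indicator_def field_simps)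
    also have "\<dots> = real (card {i\<in>{..<m}. real (Suc i) \<le> real m * W \<omega>})" by simp
    also have "\<dots> \<ge> real m * W \<omega> - 1"
      using W01[OF \<omega>] by (intro card_le_floor) (auto simp: mult_left_le)
    finally have "real m * W \<omega> - 1 \<le> (\<Sum>i<m. indicator (A i) \<omega> :: real)" .
    then have "W \<omega> \<le> (1 + (\<Sum>i<m. indicator (A i) \<omega>)) / real m" using m0 by (simp add: field_simps)
    then show ?thesis by (simp add: sum_divide_distrib add_divide_distrib)
  qed
  have intS: "integrable M (\<lambda>\<omega>. (\<Sum>i<m. (1 / real m) * indicator (A i) \<omega>))"
    using Asets by (intro Bochner_Integration.integrable_sum integrable_mult_right integrable_real_indicator) (auto simp: less_top[symmetric])
  have int: "integrable M (\<lambda>\<omega>. 1 / real m + (\<Sum>i<m. (1 / real m) * indicator (A i) \<omega>))"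
    using intS by (intro Bochner_Integration.integrable_add) auto
  have eqS: "expectation (\<lambda>\<omega>. (\<Sum>i<m. (1 / real m) * indicator (A i) \<omega>)) = (\<Sum>i<m. (1 / real m) * prob (A i))"
    using Asets by (subst Bochner_Integration.integral_sum) (auto simp: less_top[symmetric])
  have intW: "integrable M W"
    using W01 Wm by (intro integrable_const_bound[where B=1]) auto
  have "expectation W \<le> expectation (\<lambda>\<omega>. 1 / real m + (\<Sum>i<m. (1 / real m) * indicator (A i) \<omega>))"
    using pw by (intro integral_mono[OF intW int]) auto
  also have "\<dots> = 1 / real m + (\<Sum>i<m. (1 / real m) * prob (A i))"
    using intS eqS by (subst Bochner_Integration.integral_add) (auto simp: prob_space)
  also have "\<dots> \<le> 1 / real m + (\<Sum>i<m. H (real (Suc i) / real m) - H (real i / real m))"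
  proof -
    have "(1 / real m) * prob (A i) \<le> H (real (Suc i) / real m) - H (real i / real m)" if "i < m" for i
    proof -
      have "(real (Suc i) / real m - real i / real m) * prob (A i) \<le> H (real (Suc i) / real m) - H (real i / real m)"
        unfolding A_def using that m0 by (intro H) (auto simp: field_simps)
      moreover have "real (Suc i) / real m - real i / real m = 1 / real m" using m0 by (simp add: field_simps)
      ultimately show ?thesis by simp
    qed
    then show ?thesis by (intro add_left_mono sum_mono) auto
  qed
  also have "\<dots> = 1 / real m + (H 1 - H 0)"
    using sum_lessThan_telescope[of "\<lambda>i. H (real i / real m)" m] m0 by simp
  also have "\<dots> \<le> H 1 - H 0 + e"
  proof -
    have "1 / real m < e" using m e m0 by (simp add: field_simps)
    then show ?thesis by simp
  qed
  finally show "expectation W \<le> H 1 - H 0 + e" .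
qed

lemma integral_le_if:
  fixes g f :: "'a \<Rightarrow> real"
  assumes "integrable M f" "\<And>\<omega>. \<omega> \<in> space M \<Longrightarrow> g \<omega> \<le> f \<omega>" "\<And>\<omega>. \<omega> \<in> space M \<Longrightarrow> 0 \<le> f \<omega>"
  shows "integral\<^sup>L M g \<le> integral\<^sup>L M f"
proof (cases "integrable M g")
  case True
  then show ?thesis using assms by (intro integral_mono) auto
next
  case False
  then show ?thesis using assms by (simp add: not_integrable_integral_eq integral_nonneg)
qed

lemma card_as_sum:
  "real (card {j\<in>N. Q j}) = (\<Sum>j\<in>N. if Q j then 1 else 0 :: real)" if "finite N"
proof -
  have "{j\<in>N. Q j} = N \<inter> Collect Q" by auto
  then show ?thesis using that by (simp add: sum.If_cases)
qed

lemma Wf_measurable[measurable]: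
  fixes P :: "'n::finite \<Rightarrow> 'a \<Rightarrow> real"
  assumes [measurable]: "\<And>i. P i \<in> borel_measurable M"
  shows "(\<lambda>\<omega>. Wf \<alpha> N (\<lambda>j. P j \<omega>)) \<in> borel_measurable M"
  unfolding Wf_def card_as_sum[OF finite]
  by (intro borel_measurable_Max) auto

lemma Wf_01: "0 \<le> Wf \<alpha> N P \<and> Wf \<alpha> N (P::'n::finite \<Rightarrow> real) \<le> 1"
proof -
  have ne: "((\<lambda>r. min 1 (real (card {j\<in>N. P j \<le> \<alpha> * real r / real CARD('n)}) / real r)) ` {1..CARD('n)}) \<noteq> {}"
    by simp
  show ?thesis unfolding Wf_def
    using ne by (subst Max_ge_iff Max_le_iff; auto)+
qed

lemma Wf_attained:
  fixes P :: "'n::finite \<Rightarrow> real"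
  obtains r where "r \<in> {1..CARD('n)}" "Wf \<alpha> N P = min 1 (real (card {j\<in>N. P j \<le> \<alpha> * real r / real CARD('n)}) / real r)"
proof -
  have "Wf \<alpha> N P \<in> (\<lambda>r. min 1 (real (card {j\<in>N. P j \<le> \<alpha> * real r / real CARD('n)}) / real r)) ` {1..CARD('n)}"
    unfolding Wf_def by (intro Max_in) auto
  then show ?thesis using that by auto
qed

lemma harmonic_identity:
  "(\<Sum>s=1..K. 1 / real (s+1)) + real K / real (K+1) = (\<Sum>s=1..K. 1 / real s)"
proof (induction K)
  case 0 then show ?case by simp
next
  case (Suc K)
  have "(\<Sum>s=1..Suc K. 1 / real (s+1)) + real (Suc K) / real (Suc K+1)
      = ((\<Sum>s=1..K. 1 / real (s+1)) + real K / real (K+1)) + (1 / real (Suc K + 1) + real (Suc K) / real (Suc K+1) - real K / real (K+1))"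
    by simp
  also have "1 / real (Suc K + 1) + real (Suc K) / real (Suc K+1) - real K / real (K+1) = 1 / real (Suc K)"
    by (simp add: field_simps)
  finally show ?case using Suc by simp
qed

definition phi :: "nat \<Rightarrow> real \<Rightarrow> real \<Rightarrow> real" where
  "phi K \<alpha> x = (\<Sum>s=1..K. (1 / real s - 1 / real (s+1)) * (if x \<le> \<alpha> * real s / real K then 1 else 0))
      + 1 / real (K+1) * (if x \<le> \<alpha> then 1 else 0)"

lemma phi_ge:
  assumes r: "1 \<le> r" "r \<le> K" and a: "0 < \<alpha>"
  shows "(if x \<le> \<alpha> * real r / real K then 1 else 0) / real r \<le> phi K \<alpha> x"
proof (cases "x \<le> \<alpha> * real r / real K")
  case False
  have "0 \<le> phi K \<alpha> x" unfolding phi_def by (intro add_nonneg_nonneg sum_nonneg) (auto simp: field_simps)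
  then show ?thesis using False by simp
next
  case True
  have tel: "(\<Sum>s=r..K. (1 / real s - 1 / real (s+1))) = 1 / real r - 1 / real (K+1)"
  proof -
    have "(\<Sum>s=r..K. (1 / real s - 1 / real (s+1))) = - (\<Sum>s=r..<Suc K. ((\<lambda>s. 1 / real s) (Suc s) - 1 / real s))"
      by (simp add: atLeastLessThanSuc_atLeastAtMost sum_negf[symmetric])
    also have "\<dots> = 1 / real r - 1 / real (K+1)" using r by (subst sum_Suc_diff') auto
    finally show ?thesis .
  qed
  have "(\<Sum>s=r..K. (1 / real s - 1 / real (s+1))) = (\<Sum>s=r..K. (1 / real s - 1 / real (s+1)) * (if x \<le> \<alpha> * real s / real K then 1 else 0))"
  proof (intro sum.cong refl)
    fix s assume "s \<in> {r..K}"
    then have "\<alpha> * real r / real K \<le> \<alpha> * real s / real K" using a r by (intro divide_right_mono mult_left_mono) auto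
    then show "1 / real s - 1 / real (s + 1) = (1 / real s - 1 / real (s + 1)) * (if x \<le> \<alpha> * real s / real K then 1 else 0)"
      using True by auto
  qed
  also have "\<dots> \<le> (\<Sum>s=1..K. (1 / real s - 1 / real (s+1)) * (if x \<le> \<alpha> * real s / real K then 1 else 0))"
    using r by (intro sum_mono2) (auto simp: field_simps)
  finally have 1: "1 / real r - 1 / real (K+1) \<le> \<dots>" using tel by simp
  have "x \<le> \<alpha>"
  proof -
    have "\<alpha> * real r / real K \<le> \<alpha>" using r a by (simp add: field_simps)
    then show ?thesis using True by simp
  qed
  then show ?thesis using True 1 unfolding phi_def by simp
qed

lemma (in prob_space) ind_integrable:
  fixes X :: "'a \<Rightarrow> real"
  assumes [measurable]: "X \<in> borel_measurable M"
  shows "integrable M (\<lambda>\<omega>. if X \<omega> \<le> c then 1 else 0 :: real)"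
    and "expectation (\<lambda>\<omega>. if X \<omega> \<le> c then 1 else 0 :: real) = prob {\<omega>\<in>space M. X \<omega> \<le> c}"
proof -
  have eq: "\<And>\<omega>. \<omega> \<in> space M \<Longrightarrow> (if X \<omega> \<le> c then 1 else 0 :: real) = indicator {\<omega>\<in>space M. X \<omega> \<le> c} \<omega>"
    by (auto simp: indicator_def)
  have ev: "{\<omega>\<in>space M. X \<omega> \<le> c} \<in> events" by measurable
  show "integrable M (\<lambda>\<omega>. if X \<omega> \<le> c then 1 else 0 :: real)"
    using ev by (subst Bochner_Integration.integrable_cong[OF refl eq]) (auto simp: less_top[symmetric])
  have "expectation (\<lambda>\<omega>. if X \<omega> \<le> c then 1 else 0 :: real) = expectation (indicator {\<omega>\<in>space M. X \<omega> \<le> c})"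
    using eq by (intro Bochner_Integration.integral_cong) auto
  also have "\<dots> = prob {\<omega>\<in>space M. X \<omega> \<le> c}" using ev by simp
  finally show "expectation (\<lambda>\<omega>. if X \<omega> \<le> c then 1 else 0 :: real) = prob {\<omega>\<in>space M. X \<omega> \<le> c}" .
qed

lemma (in prob_space) expect_phi:
  fixes X :: "'a \<Rightarrow> real"
  assumes X[measurable]: "X \<in> borel_measurable M"
    and valid: "\<And>t. 0 \<le> t \<Longrightarrow> t \<le> 1 \<Longrightarrow> prob {\<omega>\<in>space M. X \<omega> \<le> t} \<le> t"
    and a: "0 < \<alpha>" "\<alpha> < 1" and K: "K > 0"
  shows "integrable M (\<lambda>\<omega>. phi K \<alpha> (X \<omega>))" "expectation (\<lambda>\<omega>. phi K \<alpha> (X \<omega>)) \<le> \<alpha> / real K * (\<Sum>s=1..K. 1 / real s)"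
proof -
  note ii = ind_integrable[OF X]
  show "integrable M (\<lambda>\<omega>. phi K \<alpha> (X \<omega>))" unfolding phi_def
    using ii by (intro Bochner_Integration.integrable_add Bochner_Integration.integrable_sum integrable_mult_right) auto
  have "expectation (\<lambda>\<omega>. phi K \<alpha> (X \<omega>)) = (\<Sum>s=1..K. (1 / real s - 1 / real (s+1)) * prob {\<omega>\<in>space M. X \<omega> \<le> \<alpha> * real s / real K})
      + 1 / real (K+1) * prob {\<omega>\<in>space M. X \<omega> \<le> \<alpha>}"
    unfolding phi_def using ii
    by (subst Bochner_Integration.integral_add) (auto intro!: Bochner_Integration.integrable_sum simp: Bochner_Integration.integral_sum)
  also have "\<dots> \<le> (\<Sum>s=1..K. (1 / real s - 1 / real (s+1)) * (\<alpha> * real s / real K)) + 1 / real (K+1) * \<alpha>"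
  proof (intro add_mono sum_mono mult_left_mono)
    fix s assume s: "s \<in> {1..K}"
    have "\<alpha> * real s \<le> real s" using a by (intro mult_left_le_one_le) auto
    also have "\<dots> \<le> real K" using s by simp
    finally have "\<alpha> * real s / real K \<le> 1" using K by (simp add: divide_le_eq)
    then show "prob {\<omega>\<in>space M. X \<omega> \<le> \<alpha> * real s / real K} \<le> \<alpha> * real s / real K"
      using a by (intro valid) auto
    show "0 \<le> 1 / real s - 1 / real (s+1)" using s by (simp add: field_simps)
  qed (use a valid in auto)
  also have "\<dots> = \<alpha> / real K * ((\<Sum>s=1..K. 1 / real (s+1)) + real K / real (K+1))"
  proof -
    have "(1 / real s - 1 / real (s+1)) * (\<alpha> * real s / real K) = \<alpha> / real K * (1 / real (s+1))" if "s \<in> {1..K}" for s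
    proof -
      have sp: "(0::real) < real s" using that by auto
      have "(1 / real s - 1 / real (s+1)) * (\<alpha> * real s / real K) = \<alpha> / real K * (real s * (1 / real s - 1 / real (s+1)))"
        by (simp add: algebra_simps)
      also have "real s * (1 / real s - 1 / real (s+1)) = 1 / real (s+1)"
        using sp by (simp add: right_diff_distrib) (simp add: field_simps)
      finally show ?thesis .
    qed
    then have eq1: "(\<Sum>s=1..K. (1 / real s - 1 / real (s+1)) * (\<alpha> * real s / real K)) = \<alpha> / real K * (\<Sum>s=1..K. 1 / real (s+1))"
      by (simp add: sum_distrib_left)
    have eq2: "\<alpha> / real K * (real K / real (K+1)) = 1 / real (K+1) * \<alpha>" using K by simp
    show ?thesis by (simp only: distrib_left eq1 eq2)
  qed
  also have "\<dots> = \<alpha> / real K * (\<Sum>s=1..K. 1 / real s)" by (simp only: harmonic_identity)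
  finally show "expectation (\<lambda>\<omega>. phi K \<alpha> (X \<omega>)) \<le> \<alpha> / real K * (\<Sum>s=1..K. 1 / real s)" .
qed

lemma Wf_le_phi:
  fixes P :: "'n::finite \<Rightarrow> real"
  assumes a: "0 < \<alpha>"
  shows "Wf \<alpha> N P \<le> (\<Sum>j\<in>N. phi CARD('n) \<alpha> (P j))"
proof -
  obtain r where r: "r \<in> {1..CARD('n)}" "Wf \<alpha> N P = min 1 (real (card {j\<in>N. P j \<le> \<alpha> * real r / real CARD('n)}) / real r)"
    by (rule Wf_attained)
  have "Wf \<alpha> N P \<le> real (card {j\<in>N. P j \<le> \<alpha> * real r / real CARD('n)}) / real r" using r by simp
  also have "\<dots> = (\<Sum>j\<in>N. (if P j \<le> \<alpha> * real r / real CARD('n) then 1 else 0) / real r)"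
    by (simp add: card_as_sum sum_divide_distrib)
  also have "\<dots> \<le> (\<Sum>j\<in>N. phi CARD('n) \<alpha> (P j))"
    using r a by (intro sum_mono phi_ge) auto
  finally show ?thesis .
qed

lemma sep_eq: "{j\<in>J. Q j} = J \<inter> {j. Q j}" by auto

lemma telescope_bound:
  fixes a b F t :: "nat \<Rightarrow> real"
  assumes ab: "\<And>l. l < m \<Longrightarrow> 0 \<le> b l \<and> b l \<le> a l \<and> a l \<le> F l"
    and tF: "\<And>l. l < m \<Longrightarrow> 0 < t l \<and> F l \<le> t l"
    and Fmono: "\<And>l. Suc l < m \<Longrightarrow> F l \<le> F (Suc l)"
    and key: "\<And>l. Suc l < m \<Longrightarrow> 0 < F l \<Longrightarrow> a (Suc l) / F (Suc l) \<le> b l / F l"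
  shows "(\<Sum>l<m. (a l - b l) / t l) \<le> 1"
proof -
  define c where "c l = (if l < m then (if F l > 0 then a l / F l else 1) else 0)" for l
  have c01: "0 \<le> c l \<and> c l \<le> 1" for l
  proof (cases "l < m")
    case True
    then have "0 \<le> a l" "a l \<le> F l" using ab[OF True] by linarith+
    then show ?thesis unfolding c_def using True by (auto simp: divide_le_eq_1)
  qed (simp add: c_def)
  have step: "(a l - b l) / t l \<le> c l - c (Suc l)" if l: "l < m" for l
  proof (cases "F l > 0")
    case False
    then have "F l = 0" using ab[OF l] by linarith
    then have "a l = 0" "b l = 0" using ab[OF l] by auto
    then show ?thesis using c01[of "Suc l"] False l unfolding c_def by auto
  next
    case True
    have "(a l - b l) / t l \<le> (a l - b l) / F l"
      using ab[OF l] tF[OF l] True by (intro divide_left_mono) auto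
    also have "\<dots> = a l / F l - b l / F l" by (simp add: diff_divide_distrib)
    also have "\<dots> \<le> c l - c (Suc l)"
    proof (cases "Suc l < m")
      case True2: True
      have "F (Suc l) > 0" using Fmono[OF True2] True by linarith
      then have "c (Suc l) = a (Suc l) / F (Suc l)" using True2 unfolding c_def by simp
      then show ?thesis using key[OF True2 True] True l unfolding c_def by simp
    next
      case False
      then have "c (Suc l) = 0" unfolding c_def by simp
      moreover have "0 \<le> b l / F l" using ab[OF l] True by simp
      ultimately show ?thesis using True l unfolding c_def by simp
    qed
    finally show ?thesis .
  qed
  have "(\<Sum>l<m. (a l - b l) / t l) \<le> (\<Sum>l<m. c l - c (Suc l))"
    using step by (intro sum_mono) auto
  also have "\<dots> = c 0 - c m" by (rule sum_lessThan_telescope')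
  also have "\<dots> \<le> 1" using c01[of 0] unfolding c_def by simp
  finally show ?thesis .
qed

lemma (in prob_space) measure_count_bound:
  fixes S :: "'a set" and S' :: "'j \<Rightarrow> 'a set"
  assumes J: "finite J" and S: "S \<in> events" and S': "\<And>j. j \<in> J \<Longrightarrow> S' j \<in> events"
    and sub: "\<And>j. j \<in> J \<Longrightarrow> S' j \<subseteq> S"
    and cnt: "\<And>\<omega>. \<omega> \<in> S \<Longrightarrow> c \<le> real (card {j\<in>J. \<omega> \<in> S' j})"
  shows "c * prob S \<le> (\<Sum>j\<in>J. prob (S' j))"
proof -
  have pw: "c * indicator S \<omega> \<le> (\<Sum>j\<in>J. indicator (S' j) \<omega> :: real)" for \<omega>
  proof (cases "\<omega> \<in> S")
    case True
    have e: "J \<inter> {j. \<omega> \<in> S' j} = {j\<in>J. \<omega> \<in> S' j}" by auto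
    have "(\<Sum>j\<in>J. indicator (S' j) \<omega> :: real) = real (card {j\<in>J. \<omega> \<in> S' j})"
      using J by (simp add: indicator_def sum.If_cases e)
    then show ?thesis using cnt[OF True] True by simp
  next
    case False
    then have "\<omega> \<notin> S' j" if "j \<in> J" for j using sub that by auto
    then show ?thesis using False by (simp add: indicator_def)
  qed
  have "c * prob S = expectation (\<lambda>\<omega>. c * indicator S \<omega>)" using S by simp
  also have "\<dots> \<le> expectation (\<lambda>\<omega>. \<Sum>j\<in>J. indicator (S' j) \<omega>)"
    using S S' pw by (intro integral_mono Bochner_Integration.integrable_sum integrable_mult_right integrable_real_indicator) (auto simp: less_top[symmetric])
  also have "\<dots> = (\<Sum>j\<in>J. prob (S' j))"
    using S' by (subst Bochner_Integration.integral_sum) (auto simp: less_top[symmetric])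
  finally show ?thesis .
qed

definition Dset :: "real set \<Rightarrow> real \<Rightarrow> 'n set \<Rightarrow> real \<Rightarrow> ('n \<Rightarrow> real) set" where
  "Dset T lam N s = {x. \<exists>t\<in>T. s \<le> t \<and> lam * t \<le> real (card {i\<in>N. x i \<le> t})}"

lemma Dset_sets:
  fixes N :: "'n::finite set"
  assumes "finite T"
  shows "Dset T lam N s \<in> sets (Pi\<^sub>M UNIV (\<lambda>_. borel))"
proof -
  have eq: "Dset T lam N s = (\<Union>t\<in>{t\<in>T. s \<le> t}. {x\<in>space (Pi\<^sub>M UNIV (\<lambda>_. borel)). lam * t \<le> (\<Sum>i\<in>N. if x i \<le> t then 1 else 0)})"
    unfolding Dset_def by (auto simp: space_PiM sum.If_cases sep_eq)
  show ?thesis unfolding eq using assms by (intro sets.finite_UN) (auto, measurable)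
qed

lemma Dset_mono_s:
  assumes "s \<le> s'" shows "Dset T lam N s' \<subseteq> Dset T lam N s"
proof
  fix x assume "x \<in> Dset T lam N s'"
  then obtain t where "t \<in> T" "s' \<le> t" "lam * t \<le> real (card {i\<in>N. x i \<le> t})" unfolding Dset_def by auto
  then show "x \<in> Dset T lam N s" using assms unfolding Dset_def by (auto intro!: bexI[of _ t])
qed

lemma Dset_compl_increasing:
  fixes N :: "'n::finite set"
  shows "increasing_set (- Dset T lam N s)"
  unfolding increasing_set_def
proof (intro allI impI)
  fix x y :: "'n \<Rightarrow> real"
  assume x: "x \<in> - Dset T lam N s" and xy: "\<forall>i. x i \<le> y i"
  show "y \<in> - Dset T lam N s"
  proof
    assume "y \<in> Dset T lam N s"
    then obtain t where t: "t \<in> T" "s \<le> t" "lam * t \<le> real (card {i\<in>N. y i \<le> t})" unfolding Dset_def by auto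
    have "card {i\<in>N. y i \<le> t} \<le> card {i\<in>N. x i \<le> t}"
      using xy by (intro card_mono) (auto intro: order_trans)
    then have "x \<in> Dset T lam N s" using t unfolding Dset_def by (auto intro!: bexI[of _ t])
    then show False using x by simp
  qed
qed

lemma (in prob_space) prdn_maximal:
  fixes P :: "'n::finite \<Rightarrow> 'a \<Rightarrow> real" and T :: "real set" and lam :: real
  assumes Pm: "\<And>i. P i \<in> borel_measurable M"
    and valid: "\<And>i t. i \<in> N \<Longrightarrow> 0 \<le> t \<Longrightarrow> t \<le> 1 \<Longrightarrow> prob {\<omega>\<in>space M. P i \<omega> \<le> t} \<le> t"
    and prdn: "PRDN M N P"
    and T: "finite T" "T \<subseteq> {0<..1}" and lam: "0 < lam"
  shows "prob {\<omega>\<in>space M. \<exists>t\<in>T. lam * t \<le> real (card {i\<in>N. P i \<omega> \<le> t})} \<le> real (card N) / lam"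
proof -
  define ts where "ts = sorted_list_of_set T"
  define m where "m = length ts"
  define tt where "tt l = ts ! l" for l
  have setts: "set ts = T" using T by (simp add: ts_def)
  have sw: "sorted_wrt (<) ts" unfolding ts_def by (rule strict_sorted_list_of_set)
  have ttmono: "tt l < tt l'" if "l < l'" "l' < m" for l l'
    using sw that unfolding tt_def m_def by (simp add: sorted_wrt_iff_nth_less)
  have ttT: "tt l \<in> T" if "l < m" for l using that setts unfolding tt_def m_def by auto
  have Tt: "\<exists>l<m. t = tt l" if "t \<in> T" for t using that setts unfolding tt_def m_def by (auto simp: in_set_conv_nth)
  have tt01: "0 < tt l \<and> tt l \<le> 1" if "l < m" for l using ttT[OF that] T by auto
  have Pvec[measurable]: "(\<lambda>\<omega> i. P i \<omega>) \<in> measurable M (Pi\<^sub>M UNIV (\<lambda>_. borel))"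
    using Pm by (intro measurable_PiM_single') (auto simp: space_PiM)
  define D where "D l = (if l < m then Dset T lam N (tt l) else {})" for l
  have Dsets: "D l \<in> sets (Pi\<^sub>M UNIV (\<lambda>_. borel))" for l unfolding D_def using Dset_sets[OF T(1)] by auto
  define A where "A l = {\<omega>\<in>space M. (\<lambda>i. P i \<omega>) \<in> D l}" for l
  have Aev: "A l \<in> events" for l
  proof -
    have "A l = (\<lambda>\<omega> i. P i \<omega>) -` D l \<inter> space M" unfolding A_def by auto
    then show ?thesis using measurable_sets[OF Pvec Dsets] by simp
  qed
  have Dsub: "D (Suc l) \<subseteq> D l" for l
  proof (cases "Suc l < m")
    case True
    then show ?thesis unfolding D_def using Dset_mono_s[of "tt l" "tt (Suc l)"] ttmono[of l "Suc l"] by auto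
  next
    case False then show ?thesis unfolding D_def by auto
  qed
  have Asub: "A (Suc l) \<subseteq> A l" for l using Dsub unfolding A_def by auto
  have cntA: "lam * tt l \<le> real (card {i\<in>N. P i \<omega> \<le> tt l})" if l: "l < m" and \<omega>: "\<omega> \<in> A l - A (Suc l)" for l \<omega>
  proof -
    from \<omega> l obtain t where t: "t \<in> T" "tt l \<le> t" "lam * t \<le> real (card {i\<in>N. P i \<omega> \<le> t})"
      unfolding A_def D_def Dset_def by auto
    obtain l' where l': "l' < m" "t = tt l'" using Tt[OF t(1)] by auto
    have "l \<le> l'" using ttmono[of l' l] l' t(2) l by (metis not_le order.strict_iff_not)
    have "l' = l"
    proof (rule ccontr)
      assume "l' \<noteq> l"
      then have sl0: "Suc l \<le> l'" using \<open>l \<le> l'\<close> by simp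
      then have sl: "Suc l < m" "tt (Suc l) \<le> t"
        using l' ttmono[of "Suc l" l'] by (cases "Suc l = l'"; auto)+
      then have "\<omega> \<in> A (Suc l)" using t \<omega> unfolding A_def D_def Dset_def by auto
      then show False using \<omega> by simp
    qed
    then show ?thesis using t l' by simp
  qed
  define B where "B = {\<omega>\<in>space M. \<exists>t\<in>T. lam * t \<le> real (card {i\<in>N. P i \<omega> \<le> t})}"
  show ?thesis
  proof (cases "m = 0")
    case True
    then have "T = {}" using setts unfolding m_def by auto
    then show ?thesis using lam by (simp add: B_def)
  next
    case False
    have BA: "B = A 0"
    proof -
      have "t \<in> T \<Longrightarrow> tt 0 \<le> t" for t using Tt[of t] ttmono[of 0] by (metis le_less neq0_conv)
      then show ?thesis using False unfolding B_def A_def D_def Dset_def by auto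
    qed
    have Am: "A m = {}" unfolding A_def D_def by simp
    have "prob B = (\<Sum>l<m. prob (A l) - prob (A (Suc l)))"
      using BA Am by (subst sum_lessThan_telescope') simp
    also have "\<dots> = (\<Sum>l<m. prob (A l - A (Suc l)))"
      using Aev Asub by (intro sum.cong refl) (simp add: finite_measure_Diff)
    also have "\<dots> \<le> (\<Sum>l<m. (1 / (lam * tt l)) * (\<Sum>j\<in>N. prob {\<omega>\<in>A l - A (Suc l). P j \<omega> \<le> tt l}))"
    proof (intro sum_mono)
      fix l assume l: "l \<in> {..<m}"
      have pos: "0 < lam * tt l" using lam tt01 l by auto
      have "(lam * tt l) * prob (A l - A (Suc l)) \<le> (\<Sum>j\<in>N. prob {\<omega>\<in>A l - A (Suc l). P j \<omega> \<le> tt l})"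
      proof (rule measure_count_bound)
        show "{\<omega>\<in>A l - A (Suc l). P j \<omega> \<le> tt l} \<in> events" for j
        proof -
          have "{\<omega>\<in>A l - A (Suc l). P j \<omega> \<le> tt l} = (A l - A (Suc l)) \<inter> {\<omega>\<in>space M. P j \<omega> \<le> tt l}"
            using Aev sets.sets_into_space by auto
          then show ?thesis using Aev Pm by auto
        qed
        show "lam * tt l \<le> real (card {j\<in>N. \<omega> \<in> {\<omega>\<in>A l - A (Suc l). P j \<omega> \<le> tt l}})" if "\<omega> \<in> A l - A (Suc l)" for \<omega>
          using cntA[OF _ that] l that by simp
      qed (use Aev in auto)
      then show "prob (A l - A (Suc l)) \<le> (1 / (lam * tt l)) * (\<Sum>j\<in>N. prob {\<omega>\<in>A l - A (Suc l). P j \<omega> \<le> tt l})"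
        using pos by (simp add: field_simps)
    qed
    also have "\<dots> = (1 / lam) * (\<Sum>j\<in>N. (\<Sum>l<m. (prob {\<omega>\<in>A l - A (Suc l). P j \<omega> \<le> tt l}) / tt l))"
      by (simp add: sum_distrib_left sum_divide_distrib sum.swap[of _ N] field_simps)
    also have "\<dots> \<le> (1 / lam) * (\<Sum>j\<in>N. 1)"
    proof (intro mult_left_mono sum_mono)
      fix j assume j: "j \<in> N"
      define F where "F l = prob {\<omega>\<in>space M. P j \<omega> \<le> tt l}" for l
      define a where "a l = prob {\<omega>\<in>space M. (\<lambda>i. P i \<omega>) \<in> D l \<and> P j \<omega> \<le> tt l}" for l
      define b where "b l = prob {\<omega>\<in>space M. (\<lambda>i. P i \<omega>) \<in> D (Suc l) \<and> P j \<omega> \<le> tt l}" for l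
      have evD: "{\<omega>\<in>space M. (\<lambda>i. P i \<omega>) \<in> D l' \<and> P j \<omega> \<le> c} \<in> events" for l' c
      proof -
        have "{\<omega>\<in>space M. (\<lambda>i. P i \<omega>) \<in> D l' \<and> P j \<omega> \<le> c} = A l' \<inter> {\<omega>\<in>space M. P j \<omega> \<le> c}"
          unfolding A_def by auto
        then show ?thesis using Aev Pm by auto
      qed
      have evP: "{\<omega>\<in>space M. P j \<omega> \<le> c} \<in> events" for c using Pm by measurable
      have eqab: "prob {\<omega>\<in>A l - A (Suc l). P j \<omega> \<le> tt l} = a l - b l" for l
      proof -
        have "{\<omega>\<in>A l - A (Suc l). P j \<omega> \<le> tt l} = {\<omega>\<in>space M. (\<lambda>i. P i \<omega>) \<in> D l \<and> P j \<omega> \<le> tt l} - {\<omega>\<in>space M. (\<lambda>i. P i \<omega>) \<in> D (Suc l) \<and> P j \<omega> \<le> tt l}"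
          unfolding A_def by auto
        moreover have "{\<omega>\<in>space M. (\<lambda>i. P i \<omega>) \<in> D (Suc l) \<and> P j \<omega> \<le> tt l} \<subseteq> {\<omega>\<in>space M. (\<lambda>i. P i \<omega>) \<in> D l \<and> P j \<omega> \<le> tt l}"
          using Dsub by auto
        ultimately show ?thesis unfolding a_def b_def using evD by (simp add: finite_measure_Diff)
      qed
      have "(\<Sum>l<m. (a l - b l) / tt l) \<le> 1"
      proof (rule telescope_bound)
        fix l assume l: "l < m"
        show "0 \<le> b l \<and> b l \<le> a l \<and> a l \<le> F l"
          unfolding a_def b_def F_def using evD evP Dsub by (auto intro!: finite_measure_mono)
        show "0 < tt l \<and> F l \<le> tt l" unfolding F_def using tt01[OF l] valid[OF j] by auto
      next
        fix l assume l: "Suc l < m"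
        show "F l \<le> F (Suc l)" unfolding F_def using ttmono[OF _ l, of l] evP
          by (intro finite_measure_mono) auto
        assume F0: "0 < F l"
        define Dc where "Dc = - D (Suc l)"
        have Dc: "Dc \<in> sets (Pi\<^sub>M UNIV (\<lambda>_. borel))"
        proof -
          have "Dc = space (Pi\<^sub>M UNIV (\<lambda>_. borel)) - D (Suc l)" unfolding Dc_def by (auto simp: space_PiM)
          then show ?thesis using Dsets by auto
        qed
        have incr: "increasing_set Dc" unfolding Dc_def D_def using l Dset_compl_increasing by simp
        have F0': "0 < measure M {\<omega>\<in>space M. P j \<omega> \<le> tt l}" using F0 unfolding F_def by simp
        have ineq: "measure M {\<omega>\<in>space M. (\<lambda>i. P i \<omega>) \<in> Dc \<and> P j \<omega> \<le> tt l} / measure M {\<omega>\<in>space M. P j \<omega> \<le> tt l}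
          \<le> measure M {\<omega>\<in>space M. (\<lambda>i. P i \<omega>) \<in> Dc \<and> P j \<omega> \<le> tt (Suc l)} / measure M {\<omega>\<in>space M. P j \<omega> \<le> tt (Suc l)}"
          using prdn Dc incr j ttmono[OF _ l, of l] F0' unfolding PRDN_def by auto
        have compl: "measure M {\<omega>\<in>space M. (\<lambda>i. P i \<omega>) \<in> Dc \<and> P j \<omega> \<le> c} = prob {\<omega>\<in>space M. P j \<omega> \<le> c} - prob {\<omega>\<in>space M. (\<lambda>i. P i \<omega>) \<in> D (Suc l) \<and> P j \<omega> \<le> c}" for c
        proof -
          have "{\<omega>\<in>space M. (\<lambda>i. P i \<omega>) \<in> Dc \<and> P j \<omega> \<le> c} = {\<omega>\<in>space M. P j \<omega> \<le> c} - {\<omega>\<in>space M. (\<lambda>i. P i \<omega>) \<in> D (Suc l) \<and> P j \<omega> \<le> c}"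
            unfolding Dc_def by auto
          then show ?thesis by (simp only:) (rule finite_measure_Diff, use evD evP in auto)
        qed
        have F1: "0 < F (Suc l)" using \<open>F l \<le> F (Suc l)\<close> F0 by simp
        have "(F l - b l) / F l \<le> (F (Suc l) - a (Suc l)) / F (Suc l)"
          using ineq unfolding compl F_def a_def b_def by simp
        then have "1 - b l / F l \<le> 1 - a (Suc l) / F (Suc l)"
          using F0 F1 by (simp add: diff_divide_distrib)
        then show "a (Suc l) / F (Suc l) \<le> b l / F l" by simp
      qed
      then show "(\<Sum>l<m. prob {\<omega>\<in>A l - A (Suc l). P j \<omega> \<le> tt l} / tt l) \<le> 1" using eqab by simp
    qed (use lam in auto)
    also have "\<dots> = real (card N) / lam" by simp
    finally show ?thesis unfolding B_def .
  qed
qed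

lemma Wf_ge_b:
  fixes P :: "'n::finite \<Rightarrow> real"
  assumes "b \<le> Wf \<alpha> N P"
  shows "\<exists>r\<in>{1..CARD('n)}. b * real r \<le> real (card {j\<in>N. P j \<le> \<alpha> * real r / real CARD('n)})"
proof -
  obtain r where r: "r \<in> {1..CARD('n)}" "Wf \<alpha> N P = min 1 (real (card {j\<in>N. P j \<le> \<alpha> * real r / real CARD('n)}) / real r)"
    by (rule Wf_attained)
  then have "b \<le> real (card {j\<in>N. P j \<le> \<alpha> * real r / real CARD('n)}) / real r" using assms by simp
  then have "b * real r \<le> real (card {j\<in>N. P j \<le> \<alpha> * real r / real CARD('n)})" using r(1) by (simp add: field_simps)
  then show ?thesis using r(1) by blast
qed

lemma (in prob_space) count_event:
  fixes P :: "'n::finite \<Rightarrow> 'a \<Rightarrow> real"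
  assumes [measurable]: "\<And>i. P i \<in> borel_measurable M"
  shows "{\<omega>\<in>space M. c \<le> real (card {i\<in>N. P i \<omega> \<le> t})} \<in> events"
  unfolding card_as_sum[OF finite] by measurable

lemma (in prob_space) Wf_event:
  fixes P :: "'n::finite \<Rightarrow> 'a \<Rightarrow> real"
  assumes [measurable]: "\<And>i. P i \<in> borel_measurable M"
  shows "{\<omega>\<in>space M. b \<le> Wf \<alpha> N (\<lambda>j. P j \<omega>)} \<in> events"
  by measurable

lemma (in prob_space) Wf_tail_prdn:
  fixes P :: "'n::finite \<Rightarrow> 'a \<Rightarrow> real"
  assumes Pm: "\<And>i. P i \<in> borel_measurable M"
    and valid: "\<And>i t. i \<in> N \<Longrightarrow> 0 \<le> t \<Longrightarrow> t \<le> 1 \<Longrightarrow> prob {\<omega>\<in>space M. P i \<omega> \<le> t} \<le> t"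
    and prdn: "PRDN M N P"
    and a: "0 < \<alpha>" "\<alpha> < 1" and b: "0 < b"
  shows "prob {\<omega>\<in>space M. b \<le> Wf \<alpha> N (\<lambda>j. P j \<omega>)} \<le> \<alpha> / b"
proof -
  define K where "K = CARD('n)"
  have K0: "0 < K" unfolding K_def by simp
  define T where "T = (\<lambda>r. \<alpha> * real r / real K) ` {1..K}"
  define lam where "lam = b * real K / \<alpha>"
  have lam: "0 < lam" unfolding lam_def using a b K0 by simp
  have T: "finite T" "T \<subseteq> {0<..1}"
  proof -
    show "finite T" unfolding T_def by simp
    have "\<alpha> * real r / real K \<le> 1" if "r \<in> {1..K}" for r
    proof -
      have "\<alpha> * real r \<le> real r" using a by (intro mult_left_le_one_le) auto
      also have "\<dots> \<le> real K" using that by simp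
      finally show ?thesis using K0 by (simp add: divide_le_eq)
    qed
    then show "T \<subseteq> {0<..1}" unfolding T_def using a K0 by auto
  qed
  have sub: "{\<omega>\<in>space M. b \<le> Wf \<alpha> N (\<lambda>j. P j \<omega>)} \<subseteq> {\<omega>\<in>space M. \<exists>t\<in>T. lam * t \<le> real (card {i\<in>N. P i \<omega> \<le> t})}"
  proof safe
    fix \<omega> assume "\<omega> \<in> space M" "b \<le> Wf \<alpha> N (\<lambda>j. P j \<omega>)"
    from Wf_ge_b[OF this(2)] obtain r where r: "r \<in> {1..K}" "b * real r \<le> real (card {j\<in>N. P j \<omega> \<le> \<alpha> * real r / real K})"
      unfolding K_def by blast
    have "lam * (\<alpha> * real r / real K) = b * real r" unfolding lam_def using a K0 by (simp add: field_simps)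
    then show "\<exists>t\<in>T. lam * t \<le> real (card {i\<in>N. P i \<omega> \<le> t})"
      using r unfolding T_def by (intro bexI[of _ "\<alpha> * real r / real K"]) auto
  qed
  have ev2: "{\<omega>\<in>space M. \<exists>t\<in>T. lam * t \<le> real (card {i\<in>N. P i \<omega> \<le> t})} \<in> events"
    using T(1) count_event[OF Pm] by (intro sets.sets_Collect_finite_Ex) auto
  have "prob {\<omega>\<in>space M. b \<le> Wf \<alpha> N (\<lambda>j. P j \<omega>)} \<le> prob {\<omega>\<in>space M. \<exists>t\<in>T. lam * t \<le> real (card {i\<in>N. P i \<omega> \<le> t})}"
    by (rule finite_measure_mono[OF sub ev2])
  also have "\<dots> \<le> real (card N) / lam" by (rule prdn_maximal[OF Pm valid prdn T lam])
  also have "\<dots> \<le> real K / lam" using lam unfolding K_def by (intro divide_right_mono) (auto simp: card_mono)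
  also have "\<dots> = \<alpha> / b" unfolding lam_def using K0 a b by (simp add: field_simps)
  finally show ?thesis .
qed

lemma (in prob_space) count_tail_wndn:
  fixes P :: "'n::finite \<Rightarrow> 'a \<Rightarrow> real"
  assumes Pm: "\<And>i. P i \<in> borel_measurable M"
    and valid: "\<And>i t. i \<in> N \<Longrightarrow> 0 \<le> t \<Longrightarrow> t \<le> 1 \<Longrightarrow> prob {\<omega>\<in>space M. P i \<omega> \<le> t} \<le> t"
    and wndn: "WNDN M N P" and s: "0 \<le> s" "s \<le> 1"
  shows "prob {\<omega>\<in>space M. real k \<le> real (card {i\<in>N. P i \<omega> \<le> s})} \<le> real (card N choose k) * s ^ k"
proof -
  define SS where "SS = {A. A \<subseteq> N \<and> card A = k}"
  have finSS: "finite SS" unfolding SS_def by simp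
  have evA: "{\<omega>\<in>space M. \<forall>i\<in>A. P i \<omega> \<le> s} \<in> events" for A
    using Pm by (intro sets.sets_Collect_finite_All) auto
  have sub: "{\<omega>\<in>space M. real k \<le> real (card {i\<in>N. P i \<omega> \<le> s})} \<subseteq> (\<Union>A\<in>SS. {\<omega>\<in>space M. \<forall>i\<in>A. P i \<omega> \<le> s})"
  proof safe
    fix \<omega> assume \<omega>: "\<omega> \<in> space M" "real k \<le> real (card {i\<in>N. P i \<omega> \<le> s})"
    then have "k \<le> card {i\<in>N. P i \<omega> \<le> s}" by simp
    then obtain A where A: "A \<subseteq> {i\<in>N. P i \<omega> \<le> s}" "card A = k" by (meson obtain_subset_with_card_n)
    then show "\<omega> \<in> (\<Union>A\<in>SS. {\<omega>\<in>space M. \<forall>i\<in>A. P i \<omega> \<le> s})" using \<omega> unfolding SS_def by auto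
  qed
  have "prob {\<omega>\<in>space M. real k \<le> real (card {i\<in>N. P i \<omega> \<le> s})} \<le> prob (\<Union>A\<in>SS. {\<omega>\<in>space M. \<forall>i\<in>A. P i \<omega> \<le> s})"
    using sub evA finSS by (intro finite_measure_mono) auto
  also have "\<dots> \<le> (\<Sum>A\<in>SS. prob {\<omega>\<in>space M. \<forall>i\<in>A. P i \<omega> \<le> s})"
    using evA finSS by (intro finite_measure_subadditive_finite) auto
  also have "\<dots> \<le> (\<Sum>A\<in>SS. s ^ k)"
  proof (intro sum_mono)
    fix A assume A: "A \<in> SS"
    then have AN: "A \<subseteq> N" and cA: "card A = k" unfolding SS_def by auto
    have "prob {\<omega>\<in>space M. \<forall>i\<in>A. P i \<omega> \<le> s} \<le> (\<Prod>i\<in>A. prob {\<omega>\<in>space M. P i \<omega> \<le> s})"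
      using wndn AN s unfolding WNDN_def by auto
    also have "\<dots> \<le> (\<Prod>i\<in>A. s)"
      using AN s valid by (intro prod_mono) auto
    also have "\<dots> = s ^ k" using cA by simp
    finally show "prob {\<omega>\<in>space M. \<forall>i\<in>A. P i \<omega> \<le> s} \<le> s ^ k" .
  qed
  also have "\<dots> = real (card N choose k) * s ^ k"
    unfolding SS_def by (simp add: n_subsets)
  finally show ?thesis .
qed

lemma (in prob_space) Wf_tail_wndn:
  fixes P :: "'n::finite \<Rightarrow> 'a \<Rightarrow> real"
  assumes Pm: "\<And>i. P i \<in> borel_measurable M"
    and valid: "\<And>i t. i \<in> N \<Longrightarrow> 0 \<le> t \<Longrightarrow> t \<le> 1 \<Longrightarrow> prob {\<omega>\<in>space M. P i \<omega> \<le> t} \<le> t"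
    and wndn: "WNDN M N P"
    and a: "0 < \<alpha>" "\<alpha> < 1" and b: "0 < b"
  shows "prob {\<omega>\<in>space M. b \<le> Wf \<alpha> N (\<lambda>j. P j \<omega>)} \<le> (\<Sum>k=1..CARD('n). (real k * \<alpha> / b) ^ k / fact k)"
proof -
  define K where "K = CARD('n)"
  have K0: "0 < K" unfolding K_def by simp
  define \<rho> where "\<rho> k = min K (nat \<lfloor>real k / b\<rfloor>)" for k :: nat
  define s where "s k = \<alpha> * real (\<rho> k) / real K" for k
  have cN: "card N \<le> K" unfolding K_def by (simp add: card_mono)
  have s01: "0 \<le> s k \<and> s k \<le> 1" for k
  proof -
    have "real (\<rho> k) \<le> real K" unfolding \<rho>_def by simp
    then have "\<alpha> * real (\<rho> k) \<le> 1 * real K" using a by (intro mult_mono) auto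
    then show ?thesis unfolding s_def using a K0 by (auto simp: divide_le_eq)
  qed
  have sub: "{\<omega>\<in>space M. b \<le> Wf \<alpha> N (\<lambda>j. P j \<omega>)} \<subseteq> (\<Union>k\<in>{1..K}. {\<omega>\<in>space M. real k \<le> real (card {i\<in>N. P i \<omega> \<le> s k})})"
  proof safe
    fix \<omega> assume \<omega>: "\<omega> \<in> space M" "b \<le> Wf \<alpha> N (\<lambda>j. P j \<omega>)"
    from Wf_ge_b[OF this(2)] obtain r where r: "r \<in> {1..K}" "b * real r \<le> real (card {j\<in>N. P j \<omega> \<le> \<alpha> * real r / real K})"
      unfolding K_def by blast
    define V where "V = card {j\<in>N. P j \<omega> \<le> \<alpha> * real r / real K}"
    define k where "k = nat \<lceil>b * real r\<rceil>"
    have br: "0 < b * real r" using b r by simp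
    have k1: "1 \<le> k" unfolding k_def using br by linarith
    have kge: "b * real r \<le> real k" unfolding k_def using br by linarith
    have kV: "k \<le> V"
    proof -
      have "b * real r \<le> real V" using r(2) unfolding V_def by simp
      then have "\<lceil>b * real r\<rceil> \<le> int V" by (intro ceiling_le) simp
      then show ?thesis unfolding k_def nat_le_iff .
    qed
    have "V \<le> card N" unfolding V_def by (intro card_mono) auto
    then have kK: "k \<le> K" using kV cN by simp
    have r\<rho>: "r \<le> \<rho> k"
    proof -
      have "real r \<le> real k / b" using kge b by (simp add: field_simps)
      then have "r \<le> nat \<lfloor>real k / b\<rfloor>" by (simp add: le_nat_floor le_floor_iff)
      then show ?thesis unfolding \<rho>_def using r(1) by simp
    qed
    have "\<alpha> * real r / real K \<le> s k" unfolding s_def using r\<rho> a K0 by (intro divide_right_mono mult_left_mono) auto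
    then have "V \<le> card {i\<in>N. P i \<omega> \<le> s k}" unfolding V_def by (intro card_mono) auto
    then have "real k \<le> real (card {i\<in>N. P i \<omega> \<le> s k})" using kV by simp
    then show "\<omega> \<in> (\<Union>k\<in>{1..K}. {\<omega>\<in>space M. real k \<le> real (card {i\<in>N. P i \<omega> \<le> s k})})"
      using k1 kK \<omega>(1) by auto
  qed
  have ev: "{\<omega>\<in>space M. real k \<le> real (card {i\<in>N. P i \<omega> \<le> s k})} \<in> events" for k
    by (rule count_event[OF Pm])
  have "prob {\<omega>\<in>space M. b \<le> Wf \<alpha> N (\<lambda>j. P j \<omega>)} \<le> prob (\<Union>k\<in>{1..K}. {\<omega>\<in>space M. real k \<le> real (card {i\<in>N. P i \<omega> \<le> s k})})"
    using sub ev by (intro finite_measure_mono) auto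
  also have "\<dots> \<le> (\<Sum>k\<in>{1..K}. prob {\<omega>\<in>space M. real k \<le> real (card {i\<in>N. P i \<omega> \<le> s k})})"
    using ev by (intro finite_measure_subadditive_finite) auto
  also have "\<dots> \<le> (\<Sum>k\<in>{1..K}. (real k * \<alpha> / b) ^ k / fact k)"
  proof (intro sum_mono)
    fix k assume k: "k \<in> {1..K}"
    have "prob {\<omega>\<in>space M. real k \<le> real (card {i\<in>N. P i \<omega> \<le> s k})} \<le> real (card N choose k) * s k ^ k"
      using s01[of k] by (intro count_tail_wndn[OF Pm valid wndn]) auto
    also have "\<dots> \<le> real (card N) ^ k / fact k * s k ^ k"
    proof -
      have "real (card N choose k) * fact k \<le> real (card N) ^ k"
        using binomial_fact_pow[of "card N" k] by (metis of_nat_fact of_nat_le_iff of_nat_mult of_nat_power)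
      then have "real (card N choose k) \<le> real (card N) ^ k / fact k" by (simp add: field_simps)
      then show ?thesis using s01[of k] by (intro mult_right_mono) auto
    qed
    also have "\<dots> \<le> real K ^ k / fact k * s k ^ k"
      using cN s01[of k] by (intro mult_right_mono divide_right_mono power_mono) auto
    also have "\<dots> = (real K * s k) ^ k / fact k" by (simp add: power_mult_distrib)
    also have "\<dots> \<le> (real k * \<alpha> / b) ^ k / fact k"
    proof -
      have "real K * s k = \<alpha> * real (\<rho> k)" unfolding s_def using K0 by simp
      also have "\<dots> \<le> \<alpha> * (real k / b)"
      proof -
        have "real (nat \<lfloor>real k / b\<rfloor>) \<le> real k / b" using b by (simp add: of_nat_floor)
        then have "real (\<rho> k) \<le> real k / b" unfolding \<rho>_def by (simp add: of_nat_min)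
        then show ?thesis using a by (intro mult_left_mono) auto
      qed
      also have "\<dots> = real k * \<alpha> / b" by simp
      finally have "real K * s k \<le> real k * \<alpha> / b" .
      moreover have "0 \<le> real K * s k" using s01[of k] by simp
      ultimately show ?thesis by (intro divide_right_mono power_mono) auto
    qed
    finally show "prob {\<omega>\<in>space M. real k \<le> real (card {i\<in>N. P i \<omega> \<le> s k})} \<le> (real k * \<alpha> / b) ^ k / fact k" .
  qed
  finally show ?thesis unfolding K_def .
qed

definition Gf :: "real \<Rightarrow> nat \<Rightarrow> real \<Rightarrow> real" where
  "Gf x0 K x = (if x \<le> x0 then x else x0 + ln (x / x0)
     + (\<Sum>k=2..K. real k ^ k / (fact k * real (k - 1)) * (1 / x0 ^ (k - 1) - 1 / x ^ (k - 1))))"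

definition gsum :: "nat \<Rightarrow> real \<Rightarrow> real" where
  "gsum K x = (\<Sum>k=1..K. (real k / x) ^ k / fact k)"

lemma ln_ratio_ge:
  fixes a b :: real
  assumes "0 < a" "a \<le> b"
  shows "(b - a) / b \<le> ln (b / a)"
proof -
  have "ln (a / b) \<le> a / b - 1" using assms ln_le_minus_one[of "a / b"] by simp
  moreover have "ln (b / a) = - ln (a / b)" using assms by (simp add: ln_div)
  ultimately show ?thesis using assms by (simp add: diff_divide_distrib)
qed

lemma inv_pow_diff_ge:
  fixes a b :: real
  assumes "0 < a" "a \<le> b" "1 \<le> j"
  shows "real j * (b - a) / b ^ (j + 1) \<le> 1 / a ^ j - 1 / b ^ j"
proof -
  have "1 + real j * (b / a - 1) \<le> (1 + (b / a - 1)) ^ j"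
    using assms by (intro Bernoulli_inequality) (simp add: field_simps)
  then have B: "1 + real j * (b - a) / a \<le> (b / a) ^ j" using assms by (simp add: field_simps)
  have "1 / a ^ j - 1 / b ^ j = ((b / a) ^ j - 1) / b ^ j" using assms by (simp add: field_simps power_divide)
  also have "\<dots> \<ge> (real j * (b - a) / a) / b ^ j" using B assms by (intro divide_right_mono) auto
  finally have 1: "(real j * (b - a) / a) / b ^ j \<le> 1 / a ^ j - 1 / b ^ j" .
  have "real j * (b - a) / b ^ (j + 1) = (real j * (b - a) / b) / b ^ j" by (simp add: field_simps)
  also have "\<dots> \<le> (real j * (b - a) / a) / b ^ j"
    using assms by (intro divide_right_mono divide_left_mono mult_nonneg_nonneg) auto
  finally show ?thesis using 1 by simp
qed

lemma core_ineq:
  fixes a b :: real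
  assumes a: "0 < a" "a \<le> b"
  shows "(b - a) * gsum K b \<le> ln (b / a) + (\<Sum>k=2..K. real k ^ k / (fact k * real (k - 1)) * (1 / a ^ (k - 1) - 1 / b ^ (k - 1)))"
proof -
  have tm: "(b - a) * ((real k / b) ^ k / fact k) \<le> real k ^ k / (fact k * real (k - 1)) * (1 / a ^ (k - 1) - 1 / b ^ (k - 1))"
    if k: "2 \<le> k" for k
  proof -
    define j where "j = k - 1"
    have j: "1 \<le> j" "k = j + 1" using k unfolding j_def by auto
    have jp: "real j > 0" and bp: "b > 0" using j a by auto
    have bk: "b ^ (j + 1) = b ^ k" using j(2) by simp
    have "(b - a) * ((real k / b) ^ k / fact k) = real k ^ k * (b - a) / (fact k * b ^ k)"
      by (simp add: power_divide mult.commute)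
    also have "\<dots> = real k ^ k / (fact k * real j) * (real j * (b - a) / b ^ (j + 1))"
      unfolding bk using jp bp by (simp add: field_simps)
    finally have "(b - a) * ((real k / b) ^ k / fact k) = real k ^ k / (fact k * real j) * (real j * (b - a) / b ^ (j + 1))" .
    also have "\<dots> \<le> real k ^ k / (fact k * real j) * (1 / a ^ j - 1 / b ^ j)"
      using inv_pow_diff_ge[OF a j(1)] by (intro mult_left_mono) auto
    finally show ?thesis unfolding j_def .
  qed
  show ?thesis
  proof (cases "K = 0")
    case True
    have "0 \<le> ln (b / a)" using a by simp
    then show ?thesis using True by (simp add: gsum_def)
  next
    case False
    have "gsum K b = (real 1 / b) ^ 1 / fact 1 + (\<Sum>k=2..K. (real k / b) ^ k / fact k)"
      unfolding gsum_def using False by (subst sum.atLeast_Suc_atMost) (auto simp: numeral_2_eq_2)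
    then have "(b - a) * gsum K b = (b - a) / b + (\<Sum>k=2..K. (b - a) * ((real k / b) ^ k / fact k))"
      by (simp add: distrib_left sum_distrib_left)
    also have "\<dots> \<le> ln (b / a) + (\<Sum>k=2..K. real k ^ k / (fact k * real (k - 1)) * (1 / a ^ (k - 1) - 1 / b ^ (k - 1)))"
      using ln_ratio_ge[OF a] tm by (intro add_mono sum_mono) auto
    finally show ?thesis .
  qed
qed

lemma sum_diff3:
  fixes u p q r :: "nat \<Rightarrow> real"
  shows "(\<Sum>k\<in>S. u k * (p k - q k)) - (\<Sum>k\<in>S. u k * (p k - r k)) = (\<Sum>k\<in>S. u k * (r k - q k))"
  by (simp add: sum_subtractf[symmetric] algebra_simps)

lemma Gf_incr:
  fixes a b x0 :: real
  assumes x0: "0 < x0" and ab: "0 \<le> a" "a < b"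
  shows "(b - a) * min 1 (gsum K b) \<le> Gf x0 K b - Gf x0 K a"
proof -
  have g0: "0 \<le> gsum K b" unfolding gsum_def using ab by (intro sum_nonneg) auto
  show ?thesis
  proof (cases "b \<le> x0")
    case True
    then have "Gf x0 K b - Gf x0 K a = b - a" using ab unfolding Gf_def by auto
    then show ?thesis using ab by (simp add: mult_left_le min_def)
  next
    case bx: False
    show ?thesis
    proof (cases "a \<le> x0")
      case True
      have "(b - x0) * gsum K b \<le> ln (b / x0) + (\<Sum>k=2..K. real k ^ k / (fact k * real (k - 1)) * (1 / x0 ^ (k - 1) - 1 / b ^ (k - 1)))"
        using core_ineq[of x0 b K] x0 bx by simp
      then have "Gf x0 K b - Gf x0 K a \<ge> (b - x0) * gsum K b + (x0 - a)" using True bx unfolding Gf_def by simp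
      moreover have "(b - a) * min 1 (gsum K b) \<le> (b - x0) * gsum K b + (x0 - a)"
      proof -
        have "(b - a) * min 1 (gsum K b) = (b - x0) * min 1 (gsum K b) + (x0 - a) * min 1 (gsum K b)"
          by (simp add: algebra_simps)
        also have "\<dots> \<le> (b - x0) * gsum K b + (x0 - a) * 1"
          using bx True by (intro add_mono mult_left_mono) auto
        finally show ?thesis by simp
      qed
      ultimately show ?thesis by simp
    next
      case False
      have a0: "0 < a" using False x0 by simp
      have "(b - a) * gsum K b \<le> ln (b / a) + (\<Sum>k=2..K. real k ^ k / (fact k * real (k - 1)) * (1 / a ^ (k - 1) - 1 / b ^ (k - 1)))"
        using core_ineq[of a b K] a0 ab by simp
      moreover have "Gf x0 K b - Gf x0 K a = ln (b / a) + (\<Sum>k=2..K. real k ^ k / (fact k * real (k - 1)) * (1 / a ^ (k - 1) - 1 / b ^ (k - 1)))"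
      proof -
        have "ln (b / x0) - ln (a / x0) = ln (b / a)" using a0 x0 ab by (simp add: ln_div)
        moreover have "Gf x0 K b - Gf x0 K a = (ln (b / x0) - ln (a / x0)) + ((\<Sum>k=2..K. real k ^ k / (fact k * real (k - 1)) * (1 / x0 ^ (k - 1) - 1 / b ^ (k - 1)))
            - (\<Sum>k=2..K. real k ^ k / (fact k * real (k - 1)) * (1 / x0 ^ (k - 1) - 1 / a ^ (k - 1))))"
          using False bx unfolding Gf_def by simp
        ultimately show ?thesis by (simp only: sum_diff3)
      qed
      moreover have "(b - a) * min 1 (gsum K b) \<le> (b - a) * gsum K b" using ab by (intro mult_left_mono) auto
      ultimately show ?thesis by simp
    qed
  qed
qed

lemma Gf_zero: "0 \<le> x0 \<Longrightarrow> Gf x0 K 0 = 0" unfolding Gf_def by simp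

lemma Gf_one: "1 < X \<Longrightarrow> Gf 1 1 X = 1 + ln X" unfolding Gf_def by simp

lemma gsum_one: "gsum 1 x = 1 / x" unfolding gsum_def by simp

lemma ln_10_3: "12035/10000 \<le> ln (10/3::real)"
proof -
  define g where "g n = (7/10::real) ^ (n+1) * (1 / real (n+1))" for n
  have g0: "0 \<le> g n" for n unfolding g_def by simp
  have sg: "summable g"
  proof (rule summable_comparison_test'[where g = "\<lambda>n. (7/10::real) ^ n"])
    show "summable (\<lambda>n. (7/10::real) ^ n)" by (rule summable_geometric) simp
    fix n :: nat
    have "g n \<le> (7/10) ^ (n+1) * 1" unfolding g_def by (intro mult_left_mono) auto
    also have "\<dots> \<le> (7/10) ^ n" by (simp add: power_Suc2)
    finally show "norm (g n) \<le> (7/10::real) ^ n" using g0[of n] by simp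
  qed
  have "ln (3/10::real) = (\<Sum>n. (-1)^n * (1 / real (n + 1)) * (3/10 - 1)^(Suc n))"
    by (rule ln_series) auto
  also have "(\<lambda>n. (-1)^n * (1 / real (n + 1)) * (3/10 - 1::real)^(Suc n)) = (\<lambda>n. - g n)"
  proof
    fix n
    have pm: "(-1::real)^n * (-1)^n = 1" by (simp add: power_mult_distrib[symmetric])
    have "(3/10 - 1::real) = (-1) * (7/10)" by simp
    then have "(3/10 - 1::real) ^ Suc n = - ((-1) ^ n * (7/10) ^ Suc n)"
      by (simp only: power_mult_distrib power_Suc)
    then have "(-1)^n * (1 / real (n + 1)) * (3/10 - 1::real)^(Suc n) = - (((-1)^n * (-1)^n) * ((7/10) ^ Suc n * (1 / real (n+1))))"
      by (simp only: mult_ac minus_mult_right)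
    also have "\<dots> = - g n" unfolding pm g_def by simp
    finally show "(-1)^n * (1 / real (n + 1)) * (3/10 - 1::real)^(Suc n) = - g n" .
  qed
  also have "(\<Sum>n. - g n) = - (\<Sum>n. g n)" using sg by (rule suminf_minus)
  finally have lnv: "ln (10/3::real) = (\<Sum>n. g n)"
    by (simp add: ln_div)
  have "(\<Sum>n\<in>{0..15}. g n) \<le> (\<Sum>n. g n)" using sg g0 by (intro sum_le_suminf) auto
  moreover have "12035/10000 \<le> (\<Sum>n\<in>{0..15}. g n)"
    unfolding g_def by (simp add: sum.atLeast_Suc_atMost power_divide)
  ultimately show ?thesis using lnv by simp
qed

lemma kk_fact: "1 \<le> k \<Longrightarrow> real k ^ k / fact k \<le> exp 1 ^ (k - 1)"
proof (induction k rule: dec_induct)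
  case base then show ?case by simp
next
  case (step k)
  have k0: "0 < real k" using step by simp
  have "(1 + 1 / real k) ^ k \<le> exp (1 / real k) ^ k"
    using k0 by (intro power_mono) (auto simp: add_nonneg_nonneg)
  also have "\<dots> = exp 1" using k0 by (simp add: exp_of_nat_mult[symmetric])
  finally have e: "(1 + 1 / real k) ^ k \<le> exp 1" .
  have "real (Suc k) ^ Suc k / fact (Suc k) = real (Suc k) ^ k / fact k"
    unfolding fact_Suc power_Suc by (rule mult_divide_mult_cancel_left) simp
  also have "\<dots> = (real k ^ k / fact k) * (1 + 1 / real k) ^ k"
  proof -
    have "real (Suc k) = real k * (1 + 1 / real k)" using k0 by (simp add: field_simps)
    then show ?thesis by (simp add: power_mult_distrib)
  qed
  also have "\<dots> \<le> exp 1 ^ (k - 1) * exp 1"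
    using step.IH e by (intro mult_mono) auto
  also have "\<dots> = exp 1 ^ (Suc k - 1)" using step by (cases k) auto
  finally show ?case .
qed

lemma geo_sum: "q \<noteq> 1 \<Longrightarrow> (\<Sum>k=26..25+n. (q::real) ^ (k - 1)) = (q ^ 25 - q ^ (25 + n)) / (1 - q)"
proof (induction n)
  case 0 then show ?case by simp
next
  case (Suc n)
  have iv: "{26..25+Suc n} = insert (26+n) {26..25+n}" by auto
  have "(\<Sum>k=26..25+Suc n. q ^ (k - 1)) = (\<Sum>k=26..25+n. q ^ (k - 1)) + q ^ (25 + n)"
    unfolding iv by (subst sum.insert) auto
  also have "\<dots> = (q ^ 25 - q ^ (25 + n)) / (1 - q) + q ^ (25 + n)" using Suc by simp
  also have "\<dots> = (q ^ 25 - q ^ (25 + Suc n)) / (1 - q)"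
  proof -
    have qs: "q ^ (25 + Suc n) = q * q ^ (25 + n)" by (metis add_Suc_right power_Suc)
    have q1: "1 - q \<noteq> 0" using Suc.prems by simp
    show ?thesis unfolding qs using q1 by (simp add: field_simps)
  qed
  finally show ?case .
qed

definition cterm :: "nat \<Rightarrow> real" where
  "cterm k = real k ^ k / (fact k * real (k - 1)) * (3/10) ^ (k - 1)"

lemma cterm_nonneg: "0 \<le> cterm k" unfolding cterm_def by simp

lemma cterm_tail: "26 \<le> k \<Longrightarrow> cterm k \<le> (816/1000) ^ (k - 1) / 25"
proof -
  assume k: "26 \<le> k"
  have "cterm k = (real k ^ k / fact k) * (3/10) ^ (k - 1) / real (k - 1)" unfolding cterm_def by (simp add: field_simps)
  also have "\<dots> \<le> exp 1 ^ (k - 1) * (3/10) ^ (k - 1) / real (k - 1)"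
    using kk_fact[of k] k by (intro divide_right_mono mult_right_mono) auto
  also have "\<dots> = (exp 1 * (3/10)) ^ (k - 1) / real (k - 1)" by (simp only: power_mult_distrib)
  also have "\<dots> \<le> (816/1000) ^ (k - 1) / real (k - 1)"
    using e_less_272 by (intro divide_right_mono power_mono) auto
  also have "\<dots> \<le> (816/1000) ^ (k - 1) / 25"
    using k by (intro divide_left_mono) auto
  finally show ?thesis .
qed

lemma cterm_sum: "(\<Sum>k=2..K. cterm k) \<le> 104562/100000 + 135/100000"
proof -
  have S25: "(\<Sum>k=2..25. cterm k) \<le> 104562/100000"
    unfolding cterm_def by (simp add: sum.atLeast_Suc_atMost fact_numeral power_divide)
  show ?thesis
  proof (cases "K \<le> 25")
    case True
    have "(\<Sum>k=2..K. cterm k) \<le> (\<Sum>k=2..25. cterm k)"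
      using True cterm_nonneg by (intro sum_mono2) auto
    then show ?thesis using S25 by simp
  next
    case False
    then obtain n where n: "K = 25 + n" by (metis le_add_diff_inverse nat_le_linear)
    have split: "{2..K} = {2..25} \<union> {26..25+n}" using n by auto
    have "(\<Sum>k=2..K. cterm k) = (\<Sum>k=2..25. cterm k) + (\<Sum>k=26..25+n. cterm k)"
      unfolding split by (subst sum.union_disjoint) auto
    also have "(\<Sum>k=26..25+n. cterm k) \<le> (\<Sum>k=26..25+n. (816/1000) ^ (k - 1) / 25)"
      using cterm_tail by (intro sum_mono) auto
    also have "\<dots> = (\<Sum>k=26..25+n. (816/1000::real) ^ (k - 1)) / 25" by (simp add: sum_divide_distrib)
    also have "\<dots> = ((816/1000) ^ 25 - (816/1000) ^ (25 + n)) / (1 - 816/1000) / 25" using geo_sum[of "816/1000::real" n] by simp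
    also have "\<dots> \<le> (816/1000) ^ 25 / (1 - 816/1000) / 25" by (intro divide_right_mono) auto
    also have "\<dots> \<le> 135/100000" by (simp add: power_divide)
    finally show ?thesis using S25 by simp
  qed
qed

lemma Gf_const:
  assumes X: "1 < X"
  shows "Gf (10/3) K X \<le> 318/100 + ln X"
proof (cases "X \<le> 10/3")
  case True
  then have G: "Gf (10/3) K X = X" unfolding Gf_def by simp
  show ?thesis
  proof (cases "X \<le> 318/100")
    case True
    have "0 < ln X" using X by simp
    then show ?thesis using G True by simp
  next
    case False
    have "ln (1 / X) \<le> 1 / X - 1" using X by (intro ln_le_minus_one) auto
    then have "1 - 1 / X \<le> ln X" using X by (simp add: ln_div)
    moreover have "1 / X \<le> 1 / (318/100)" using False by (intro divide_left_mono) auto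
    ultimately show ?thesis using G True by simp
  qed
next
  case False
  have "Gf (10/3) K X = 10/3 + ln (X / (10/3)) + (\<Sum>k=2..K. real k ^ k / (fact k * real (k - 1)) * (1 / (10/3) ^ (k - 1) - 1 / X ^ (k - 1)))"
    using False unfolding Gf_def by simp
  also have "(\<Sum>k=2..K. real k ^ k / (fact k * real (k - 1)) * (1 / (10/3) ^ (k - 1) - 1 / X ^ (k - 1))) \<le> (\<Sum>k=2..K. cterm k)"
  proof (intro sum_mono)
    fix k assume "k \<in> {2..K}"
    have "1 / (10/3::real) ^ (k - 1) - 1 / X ^ (k - 1) \<le> (3/10) ^ (k - 1)"
      using X by (simp add: power_divide)
    then show "real k ^ k / (fact k * real (k - 1)) * (1 / (10/3) ^ (k - 1) - 1 / X ^ (k - 1)) \<le> cterm k"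
      unfolding cterm_def by (intro mult_left_mono) auto
  qed
  also have "ln (X / (10/3)) = ln X - ln (10/3)" using X by (intro ln_divide_pos) auto
  finally have "Gf (10/3) K X \<le> 10/3 + (ln X - ln (10/3)) + (\<Sum>k=2..K. cterm k)" by simp
  then show ?thesis using ln_10_3 cterm_sum[of K] by linarith
qed

lemma upset_ratio:
  fixes U :: "real set" and M :: "real measure"
  assumes psM: "prob_space M" and sM: "sets M = sets borel"
    and up: "\<And>p q. p \<in> U \<Longrightarrow> p \<le> q \<Longrightarrow> q \<in> U"
    and Ux: "U \<inter> {..x} \<in> sets M" and xz: "x \<le> z"
  shows "measure M (U \<inter> {..x}) * measure M {..z} \<le> measure M (U \<inter> {..z}) * measure M {..x}"
proof -
  interpret prob_space M by (rule psM)
  show ?thesis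
proof (cases "U \<inter> {..x} = {}")
  case True
  then show ?thesis by simp
next
  case False
  then obtain p0 where p0: "p0 \<in> U" "p0 \<le> x" by auto
  have sub: "{x<..z} \<subseteq> U" using p0 up by auto
  have ev: "{..x} \<in> events" "{..z} \<in> events" "{x<..z} \<in> events" using sM by auto
  have e1: "U \<inter> {..z} = (U \<inter> {..x}) \<union> {x<..z}" using sub xz by auto
  have e2: "{..z} = {..x} \<union> {x<..z}" using xz by auto
  have p1: "prob (U \<inter> {..z}) = prob (U \<inter> {..x}) + prob {x<..z}"
    unfolding e1 using Ux ev by (intro finite_measure_Union) auto
  have p2: "prob {..z} = prob {..x} + prob {x<..z}"
    unfolding e2 using ev by (subst finite_measure_Union) auto
  have le: "prob (U \<inter> {..x}) \<le> prob {..x}" using ev by (intro finite_measure_mono) auto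
  have "prob (U \<inter> {..x}) * prob {x<..z} \<le> prob {..x} * prob {x<..z}"
    using le by (intro mult_right_mono) auto
  then show ?thesis unfolding p1 p2 by (simp add: algebra_simps)
qed
qed

lemma (in prob_space) indep_PRDN:
  fixes P :: "'n::finite \<Rightarrow> 'a \<Rightarrow> real"
  assumes Pm: "\<And>i. P i \<in> borel_measurable M"
    and ind: "indep_vars (\<lambda>_. borel) P UNIV"
  shows "PRDN M N P"
  unfolding PRDN_def
proof (intro allI impI)
  fix D :: "('n \<Rightarrow> real) set" and k :: 'n and x z :: real
  assume D: "D \<in> sets (Pi\<^sub>M UNIV (\<lambda>_. borel))" and incr: "increasing_set D" and "k \<in> N"
    and xz: "x \<le> z" and Fx: "0 < measure M {\<omega>\<in>space M. P k \<omega> \<le> x}"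
  define B where "B = UNIV - {k}"
  define Y where "Y \<omega> = restrict (\<lambda>i. P i \<omega>) B" for \<omega>
  define X where "X \<omega> = restrict (\<lambda>i. P i \<omega>) {k}" for \<omega>
  define SK where "SK = Pi\<^sub>M {k} (\<lambda>_. (borel :: real measure))"
  define SB where "SB = Pi\<^sub>M B (\<lambda>_. (borel :: real measure))"
  have indXY: "indep_var SK X SB Y"
    unfolding Y_def X_def B_def SK_def SB_def by (rule indep_var_restrict[OF ind]) auto
  have Xm: "X \<in> measurable M SK" using indXY by (rule indep_var_rv1)
  have Ym: "Y \<in> measurable M SB" using indXY by (rule indep_var_rv2)
  define \<mu> where "\<mu> = distr M SK X"
  define \<nu> where "\<nu> = distr M SB Y"
  define \<mu>r where "\<mu>r = distr M borel (P k)"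
  have joint: "\<mu> \<Otimes>\<^sub>M \<nu> = distr M (SK \<Otimes>\<^sub>M SB) (\<lambda>\<omega>. (X \<omega>, Y \<omega>))"
    using indXY unfolding indep_var_distribution_eq \<mu>_def \<nu>_def by simp
  interpret mu: prob_space \<mu> unfolding \<mu>_def by (rule prob_space_distr) (rule Xm)
  interpret nu: prob_space \<nu> unfolding \<nu>_def by (rule prob_space_distr) (rule Ym)
  interpret mur: prob_space \<mu>r unfolding \<mu>r_def by (rule prob_space_distr) (rule Pm)
  interpret XY: pair_prob_space \<mu> \<nu> ..
  define mg where "mg = (\<lambda>(f::'n \<Rightarrow> real, v::'n \<Rightarrow> real). v(k := f k))"
  have mgm: "mg \<in> measurable (SK \<Otimes>\<^sub>M SB) (Pi\<^sub>M UNIV (\<lambda>_. borel))"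
  proof (rule measurable_PiM_single')
    fix i :: 'n
    show "(\<lambda>\<omega>. mg \<omega> i) \<in> borel_measurable (SK \<Otimes>\<^sub>M SB)"
    proof (cases "i = k")
      case True
      then have "(\<lambda>\<omega>. mg \<omega> i) = (\<lambda>f. f k) \<circ> fst" unfolding mg_def by (auto simp: fun_eq_iff)
      moreover have "(\<lambda>f. f k) \<in> borel_measurable SK"
        unfolding SK_def by (intro measurable_component_singleton) auto
      ultimately show ?thesis by (simp add: measurable_comp)
    next
      case False
      then have "(\<lambda>\<omega>. mg \<omega> i) = (\<lambda>v. v i) \<circ> snd" unfolding mg_def by (auto simp: fun_eq_iff)
      moreover have "(\<lambda>v. v i) \<in> borel_measurable SB"
        using False unfolding B_def SB_def by (intro measurable_component_singleton) auto
      ultimately show ?thesis by (simp add: measurable_comp)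
    qed
  qed (auto simp: space_PiM)
  define S where "S c = {pv \<in> space (SK \<Otimes>\<^sub>M SB). mg pv \<in> D \<and> fst pv k \<le> c}" for c
  have Ssets: "S c \<in> sets (SK \<Otimes>\<^sub>M SB)" for c
  proof -
    have "S c = (mg -` D \<inter> space (SK \<Otimes>\<^sub>M SB)) \<inter> {pv \<in> space (SK \<Otimes>\<^sub>M SB). fst pv k \<le> c}"
      unfolding S_def by auto
    moreover have "(\<lambda>pv. fst pv k) \<in> borel_measurable (SK \<Otimes>\<^sub>M SB)"
    proof -
      have "(\<lambda>f. f k) \<in> borel_measurable SK"
        unfolding SK_def by (intro measurable_component_singleton) auto
      then have "(\<lambda>f. f k) \<circ> fst \<in> borel_measurable (SK \<Otimes>\<^sub>M SB)" by (simp add: measurable_comp)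
      then show ?thesis by (simp add: comp_def)
    qed
    then have "{pv \<in> space (SK \<Otimes>\<^sub>M SB). fst pv k \<le> c} \<in> sets (SK \<Otimes>\<^sub>M SB)"
      by measurable
    ultimately show ?thesis using measurable_sets[OF mgm D] by auto
  qed
  have vec: "mg (X \<omega>, Y \<omega>) = (\<lambda>i. P i \<omega>)" for \<omega> unfolding mg_def Y_def X_def B_def by (auto simp: fun_eq_iff)
  have PXY: "(\<lambda>\<omega>. (X \<omega>, Y \<omega>)) \<in> measurable M (SK \<Otimes>\<^sub>M SB)"
    using Xm Ym by (intro measurable_Pair) auto
  have probE: "prob {\<omega>\<in>space M. (\<lambda>i. P i \<omega>) \<in> D \<and> P k \<omega> \<le> c} = measure (\<mu> \<Otimes>\<^sub>M \<nu>) (S c)" for c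
  proof -
    have "{\<omega>\<in>space M. (\<lambda>i. P i \<omega>) \<in> D \<and> P k \<omega> \<le> c} = (\<lambda>\<omega>. (X \<omega>, Y \<omega>)) -` S c \<inter> space M"
      unfolding S_def using measurable_space[OF PXY] vec by (auto simp: X_def)
    then show ?thesis unfolding joint using Ssets PXY by (simp add: measure_distr)
  qed
  have probF: "prob {\<omega>\<in>space M. P k \<omega> \<le> c} = measure \<mu>r {..c}" for c
  proof -
    have "{\<omega>\<in>space M. P k \<omega> \<le> c} = P k -` {..c} \<inter> space M" by auto
    then show ?thesis unfolding \<mu>r_def using Pm by (simp add: measure_distr)
  qed
  have sM: "sets \<mu>r = sets borel" unfolding \<mu>r_def by simp
  define U where "U v = {p. v(k := p) \<in> D}" for v
  define \<iota> where "\<iota> p = (\<lambda>i\<in>{k}. (p::real))" for p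
  have \<iota>m: "\<iota> \<in> measurable borel SK" unfolding \<iota>_def SK_def by (intro measurable_restrict) auto
  have spnu: "space \<nu> = space SB" unfolding \<nu>_def by simp
  have secsets: "(\<lambda>f. (f, v)) -` S c \<in> sets \<mu>" for v c
    using sets_Pair2[OF Ssets] unfolding \<mu>_def by simp
  have Usets: "U v \<inter> {..c} \<in> sets borel" if v: "v \<in> space \<nu>" for v c
  proof -
    have "U v \<inter> {..c} = \<iota> -` ((\<lambda>f. (f, v)) -` S c) \<inter> space borel"
      using v spnu unfolding U_def \<iota>_def S_def mg_def
      by (auto simp: space_pair_measure SK_def space_PiM)
    moreover have "(\<lambda>f. (f, v)) -` S c \<in> sets SK" using secsets[of v c] unfolding \<mu>_def by simp
    ultimately show ?thesis using measurable_sets[OF \<iota>m] by simp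
  qed
  have secm: "emeasure \<mu> ((\<lambda>f. (f, v)) -` S c) = emeasure \<mu>r (U v \<inter> {..c})" if v: "v \<in> space \<nu>" for v c
  proof -
    have "emeasure \<mu> ((\<lambda>f. (f, v)) -` S c) = emeasure M (X -` ((\<lambda>f. (f, v)) -` S c) \<inter> space M)"
      unfolding \<mu>_def using Xm secsets[of v c] by (intro emeasure_distr) (auto simp: \<mu>_def)
    also have "X -` ((\<lambda>f. (f, v)) -` S c) \<inter> space M = P k -` (U v \<inter> {..c}) \<inter> space M"
      using v spnu measurable_space[OF Xm] unfolding U_def S_def mg_def
      by (auto simp: space_pair_measure X_def)
    also have "emeasure M (P k -` (U v \<inter> {..c}) \<inter> space M) = emeasure \<mu>r (U v \<inter> {..c})"
      unfolding \<mu>r_def using Pm Usets[OF v] by (intro emeasure_distr[symmetric]) auto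
    finally show ?thesis .
  qed
  have pw: "emeasure \<mu> ((\<lambda>f. (f, v)) -` S x) * emeasure \<mu>r {..z} \<le> emeasure \<mu> ((\<lambda>f. (f, v)) -` S z) * emeasure \<mu>r {..x}"
    if v: "v \<in> space \<nu>" for v
  proof -
    have up: "q \<in> U v" if "p \<in> U v" "p \<le> q" for p q
    proof -
      have "v(k := p) \<in> D" using that U_def by auto
      moreover have "\<forall>i. (v(k := p)) i \<le> (v(k := q)) i" using that by auto
      ultimately show ?thesis using incr unfolding increasing_set_def U_def by blast
    qed
    have r: "measure \<mu>r (U v \<inter> {..x}) * measure \<mu>r {..z} \<le> measure \<mu>r (U v \<inter> {..z}) * measure \<mu>r {..x}"
    proof (rule upset_ratio[OF mur.prob_space_axioms sM])
      show "\<And>p q. p \<in> U v \<Longrightarrow> p \<le> q \<Longrightarrow> q \<in> U v" using up by blast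
      show "U v \<inter> {..x} \<in> sets \<mu>r" using Usets[OF v] sM by simp
      show "x \<le> z" by (rule xz)
    qed
    show ?thesis unfolding secm[OF v] mur.emeasure_eq_measure
      using r by (simp add: ennreal_mult[symmetric])
  qed
  have Ssets': "S c \<in> sets (\<mu> \<Otimes>\<^sub>M \<nu>)" for c
  proof -
    have "sets (\<mu> \<Otimes>\<^sub>M \<nu>) = sets (SK \<Otimes>\<^sub>M SB)"
      by (rule sets_pair_measure_cong) (simp_all add: \<mu>_def \<nu>_def)
    then show ?thesis using Ssets by simp
  qed
  have "emeasure (\<mu> \<Otimes>\<^sub>M \<nu>) (S x) * emeasure \<mu>r {..z} = (\<integral>\<^sup>+v. emeasure \<mu> ((\<lambda>f. (f, v)) -` S x) \<partial>\<nu>) * emeasure \<mu>r {..z}"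
    by (simp add: XY.emeasure_pair_measure_alt2[OF Ssets'])
  also have "\<dots> = (\<integral>\<^sup>+v. emeasure \<mu> ((\<lambda>f. (f, v)) -` S x) * emeasure \<mu>r {..z} \<partial>\<nu>)"
    by (rule nn_integral_multc[symmetric, OF XY.measurable_emeasure_Pair2[OF Ssets']])
  also have "\<dots> \<le> (\<integral>\<^sup>+v. emeasure \<mu> ((\<lambda>f. (f, v)) -` S z) * emeasure \<mu>r {..x} \<partial>\<nu>)"
    using pw by (intro nn_integral_mono) auto
  also have "\<dots> = (\<integral>\<^sup>+v. emeasure \<mu> ((\<lambda>f. (f, v)) -` S z) \<partial>\<nu>) * emeasure \<mu>r {..x}"
    by (rule nn_integral_multc[OF XY.measurable_emeasure_Pair2[OF Ssets']])
  also have "\<dots> = emeasure (\<mu> \<Otimes>\<^sub>M \<nu>) (S z) * emeasure \<mu>r {..x}"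
    by (simp add: XY.emeasure_pair_measure_alt2[OF Ssets'])
  finally have "measure (\<mu> \<Otimes>\<^sub>M \<nu>) (S x) * measure \<mu>r {..z} \<le> measure (\<mu> \<Otimes>\<^sub>M \<nu>) (S z) * measure \<mu>r {..x}"
    by (simp add: XY.emeasure_eq_measure mur.emeasure_eq_measure ennreal_mult[symmetric])
  then have main: "prob {\<omega>\<in>space M. (\<lambda>i. P i \<omega>) \<in> D \<and> P k \<omega> \<le> x} * prob {\<omega>\<in>space M. P k \<omega> \<le> z}
      \<le> prob {\<omega>\<in>space M. (\<lambda>i. P i \<omega>) \<in> D \<and> P k \<omega> \<le> z} * prob {\<omega>\<in>space M. P k \<omega> \<le> x}"
    unfolding probE probF .
  have Fz: "prob {\<omega>\<in>space M. P k \<omega> \<le> x} \<le> prob {\<omega>\<in>space M. P k \<omega> \<le> z}"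
    using xz Pm by (intro finite_measure_mono) auto
  then have Fz0: "0 < prob {\<omega>\<in>space M. P k \<omega> \<le> z}" using Fx by simp
  show "measure M {\<omega> \<in> space M. (\<lambda>i. P i \<omega>) \<in> D \<and> P k \<omega> \<le> x} / measure M {\<omega> \<in> space M. P k \<omega> \<le> x}
       \<le> measure M {\<omega> \<in> space M. (\<lambda>i. P i \<omega>) \<in> D \<and> P k \<omega> \<le> z} / measure M {\<omega> \<in> space M. P k \<omega> \<le> z}"
    using main Fx Fz0 by (simp add: divide_simps mult.commute)
qed

lemma (in prob_space) W_bound_general:
  fixes W :: "'a \<Rightarrow> real"
  assumes Wm: "W \<in> borel_measurable M" and W01: "\<And>\<omega>. \<omega> \<in> space M \<Longrightarrow> 0 \<le> W \<omega> \<and> W \<omega> \<le> 1"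
    and tail: "\<And>b. 0 < b \<Longrightarrow> b \<le> 1 \<Longrightarrow> prob {\<omega>\<in>space M. b \<le> W \<omega>} \<le> gsum K' (b / \<alpha>)"
    and a: "0 < \<alpha>" and x0: "0 < x0"
  shows "expectation W \<le> \<alpha> * Gf x0 K' (1 / \<alpha>)"
proof -
  define H where "H w = \<alpha> * Gf x0 K' (w / \<alpha>)" for w
  have "expectation W \<le> H 1 - H 0"
  proof (rule expectation_bound_H[OF Wm W01])
    fix a' b :: real assume ab: "0 \<le> a'" "a' < b" "b \<le> 1"
    have pb: "prob {\<omega>\<in>space M. b \<le> W \<omega>} \<le> min 1 (gsum K' (b / \<alpha>))"
      using tail[of b] ab by auto
    have "(b - a') * prob {\<omega>\<in>space M. b \<le> W \<omega>} \<le> (b - a') * min 1 (gsum K' (b / \<alpha>))"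
      using pb ab by (intro mult_left_mono) auto
    also have "\<dots> = \<alpha> * ((b / \<alpha> - a' / \<alpha>) * min 1 (gsum K' (b / \<alpha>)))"
      using a by (simp add: field_simps)
    also have "\<dots> \<le> \<alpha> * (Gf x0 K' (b / \<alpha>) - Gf x0 K' (a' / \<alpha>))"
      using a ab by (intro mult_left_mono Gf_incr[OF x0]) (auto simp: divide_strict_right_mono)
    also have "\<dots> = H b - H a'" unfolding H_def by (simp add: algebra_simps)
    finally show "(b - a') * prob {\<omega>\<in>space M. b \<le> W \<omega>} \<le> H b - H a'" .
  qed auto
  also have "H 1 - H 0 = \<alpha> * Gf x0 K' (1 / \<alpha>)" unfolding H_def using x0 by (simp add: Gf_zero)
  finally show ?thesis .
qed

theorem theorem3:
  fixes M :: "'a measure" and N :: "'n::finite set" and \<alpha> :: real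
    and E F :: "'n \<Rightarrow> 'a \<Rightarrow> real" and SE :: "('n \<Rightarrow> real) \<Rightarrow> 'n set"
    and P Q :: "'n \<Rightarrow> 'a \<Rightarrow> real" and SP :: "('n \<Rightarrow> real) \<Rightarrow> 'n set"
  assumes M: "prob_space M"
    and alpha: "0 < \<alpha>" "\<alpha> < 1"
    \<comment> \<open>part (i): e-values and proxies\<close>
    and E_meas: "\<And>i. E i \<in> borel_measurable M"
    and E_nonneg: "\<And>i \<omega>. \<omega> \<in> space M \<Longrightarrow> 0 \<le> E i \<omega>"
    and E_valid: "\<And>i. i \<in> N \<Longrightarrow> (\<integral>\<^sup>+ \<omega>. ennreal (E i \<omega>) \<partial>M) \<le> 1"
    and F_nonneg: "\<And>i \<omega>. \<omega> \<in> space M \<Longrightarrow> 0 \<le> F i \<omega>"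
    and SE_meas: "\<And>i. {\<omega> \<in> space M. i \<in> SE (\<lambda>j. F j \<omega>)} \<in> sets M"
    \<comment> \<open>part (ii): p-values and proxies\<close>
    and P_meas: "\<And>i. P i \<in> borel_measurable M"
    and P_valid: "\<And>i t. i \<in> N \<Longrightarrow> 0 \<le> t \<Longrightarrow> t \<le> 1 \<Longrightarrow>
                    measure M {\<omega> \<in> space M. P i \<omega> \<le> t} \<le> t"
    and Q_range: "\<And>i \<omega>. \<omega> \<in> space M \<Longrightarrow> 0 \<le> Q i \<omega> \<and> Q i \<omega> \<le> 1"
    and SP_meas: "\<And>i. {\<omega> \<in> space M. i \<in> SP (\<lambda>j. Q j \<omega>)} \<in> sets M"
  shows
    "FDR M N (\<lambda>\<omega>. eBH \<alpha> (\<lambda>i. E i \<omega> * (if i \<in> SE (\<lambda>j. F j \<omega>) then 1 else 0))) \<le> \<alpha>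
     \<and> ((prob_space.indep_vars M (\<lambda>_. borel) P UNIV \<or> PRDN M N P) \<longrightarrow>
          FDR M N (\<lambda>\<omega>. BH \<alpha> (\<lambda>i. max (P i \<omega>) (if i \<notin> SP (\<lambda>j. Q j \<omega>) then 1 else 0)))
            \<le> \<alpha> * (1 + ln (1 / \<alpha>)))
     \<and> (WNDN M N P \<longrightarrow>
          FDR M N (\<lambda>\<omega>. BH \<alpha> (\<lambda>i. max (P i \<omega>) (if i \<notin> SP (\<lambda>j. Q j \<omega>) then 1 else 0)))
            \<le> \<alpha> * (3.18 + ln (1 / \<alpha>)))
     \<and> FDR M N (\<lambda>\<omega>. BH \<alpha> (\<lambda>i. max (P i \<omega>) (if i \<notin> SP (\<lambda>j. Q j \<omega>) then 1 else 0)))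
            \<le> \<alpha> * (\<Sum>k = 1..CARD('n). 1 / real k)"
proof -
  interpret prob_space M by (rule M)
  define K where "K = CARD('n)"
  have K0: "0 < K" unfolding K_def by simp
  have cN: "card N \<le> K" unfolding K_def by (simp add: card_mono)
  have Eint: "integrable M (E j)" if "j \<in> N" for j
    using E_meas E_nonneg E_valid[OF that] by (intro integrableI_nonneg) (auto simp: top.not_eq_extremum intro: le_less_trans)
  have Eexp: "expectation (E j) \<le> 1" if "j \<in> N" for j
  proof -
    have "ennreal (expectation (E j)) = (\<integral>\<^sup>+ \<omega>. ennreal (E j \<omega>) \<partial>M)"
      using Eint[OF that] E_nonneg by (intro nn_integral_eq_integral[symmetric]) auto
    then show ?thesis using E_valid[OF that] by (metis ennreal_le_1)
  qed
  have part1: "FDR M N (\<lambda>\<omega>. eBH \<alpha> (\<lambda>i. E i \<omega> * (if i \<in> SE (\<lambda>j. F j \<omega>) then 1 else 0))) \<le> \<alpha>"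
  proof -
    define f where "f \<omega> = (\<Sum>j\<in>N. \<alpha> * E j \<omega> / real K)" for \<omega>
    have fint: "integrable M f" unfolding f_def using Eint by (intro Bochner_Integration.integrable_sum integrable_divide integrable_mult_right) auto
    have "FDR M N (\<lambda>\<omega>. eBH \<alpha> (\<lambda>i. E i \<omega> * (if i \<in> SE (\<lambda>j. F j \<omega>) then 1 else 0))) \<le> expectation f"
      unfolding FDR_def
    proof (rule integral_le_if[OF fint])
      fix \<omega> assume \<omega>: "\<omega> \<in> space M"
      have "real (card (N \<inter> eBH \<alpha> (\<lambda>i. E i \<omega> * (if i \<in> SE (\<lambda>j. F j \<omega>) then 1 else 0)))) /
          real (max (card (eBH \<alpha> (\<lambda>i. E i \<omega> * (if i \<in> SE (\<lambda>j. F j \<omega>) then 1 else 0)))) 1)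
          \<le> (\<Sum>j\<in>N. \<alpha> * (E j \<omega> * (if j \<in> SE (\<lambda>j. F j \<omega>) then 1 else 0)) / real CARD('n))"
        using alpha E_nonneg[OF \<omega>] by (intro eBH_pointwise) auto
      also have "\<dots> \<le> f \<omega>" unfolding f_def K_def
        using alpha E_nonneg[OF \<omega>] by (intro sum_mono divide_right_mono mult_left_mono) auto
      finally show "real (card (N \<inter> eBH \<alpha> (\<lambda>i. E i \<omega> * (if i \<in> SE (\<lambda>j. F j \<omega>) then 1 else 0)))) /
          real (max (card (eBH \<alpha> (\<lambda>i. E i \<omega> * (if i \<in> SE (\<lambda>j. F j \<omega>) then 1 else 0)))) 1) \<le> f \<omega>" .
      show "0 \<le> f \<omega>" unfolding f_def using alpha E_nonneg[OF \<omega>] by (intro sum_nonneg) auto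
    qed
    also have "expectation f = (\<Sum>j\<in>N. \<alpha> / real K * expectation (E j))"
      unfolding f_def using Eint by (subst Bochner_Integration.integral_sum) (auto simp: field_simps)
    also have "\<dots> \<le> (\<Sum>j\<in>N. \<alpha> / real K * 1)"
      using Eexp alpha K0 by (intro sum_mono mult_left_mono) auto
    also have "\<dots> = \<alpha> * real (card N) / real K" by simp
    also have "\<dots> \<le> \<alpha> * real K / real K" using cN alpha K0 by (intro divide_right_mono mult_left_mono) auto
    also have "\<dots> = \<alpha>" using K0 by simp
    finally show ?thesis .
  qed
  define W where "W \<omega> = Wf \<alpha> N (\<lambda>j. P j \<omega>)" for \<omega>
  have Wm: "W \<in> borel_measurable M" unfolding W_def using P_meas by (rule Wf_measurable)
  have W01: "0 \<le> W \<omega> \<and> W \<omega> \<le> 1" for \<omega> unfolding W_def by (rule Wf_01)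
  have Wint: "integrable M W" using Wm W01 by (intro integrable_const_bound[where B=1]) auto
  have FDRW: "FDR M N (\<lambda>\<omega>. BH \<alpha> (\<lambda>i. max (P i \<omega>) (if i \<notin> SP (\<lambda>j. Q j \<omega>) then 1 else 0))) \<le> expectation W"
    unfolding FDR_def
  proof (rule integral_le_if[OF Wint])
    fix \<omega> assume "\<omega> \<in> space M"
    show "real (card (N \<inter> BH \<alpha> (\<lambda>i. max (P i \<omega>) (if i \<notin> SP (\<lambda>j. Q j \<omega>) then 1 else 0)))) /
        real (max (card (BH \<alpha> (\<lambda>i. max (P i \<omega>) (if i \<notin> SP (\<lambda>j. Q j \<omega>) then 1 else 0)))) 1) \<le> W \<omega>"
      unfolding W_def using alpha by (intro BH_pointwise) auto
    show "0 \<le> W \<omega>" using W01 by simp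
  qed
  have part4: "FDR M N (\<lambda>\<omega>. BH \<alpha> (\<lambda>i. max (P i \<omega>) (if i \<notin> SP (\<lambda>j. Q j \<omega>) then 1 else 0)))
            \<le> \<alpha> * (\<Sum>k = 1..CARD('n). 1 / real k)"
  proof -
    have phint: "integrable M (\<lambda>\<omega>. phi K \<alpha> (P j \<omega>))" if "j \<in> N" for j
      using expect_phi(1)[OF P_meas P_valid[OF that] alpha K0] by simp
    have phexp: "expectation (\<lambda>\<omega>. phi K \<alpha> (P j \<omega>)) \<le> \<alpha> / real K * (\<Sum>s=1..K. 1 / real s)" if "j \<in> N" for j
      using expect_phi(2)[OF P_meas P_valid[OF that] alpha K0] by simp
    have "expectation W \<le> expectation (\<lambda>\<omega>. \<Sum>j\<in>N. phi K \<alpha> (P j \<omega>))"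
      using Wint phint unfolding W_def K_def by (intro integral_mono Bochner_Integration.integrable_sum Wf_le_phi alpha) auto
    also have "\<dots> = (\<Sum>j\<in>N. expectation (\<lambda>\<omega>. phi K \<alpha> (P j \<omega>)))"
      using phint by (intro Bochner_Integration.integral_sum) auto
    also have "\<dots> \<le> (\<Sum>j\<in>N. \<alpha> / real K * (\<Sum>s=1..K. 1 / real s))" using phexp by (intro sum_mono) auto
    also have "\<dots> = real (card N) * (\<alpha> / real K * (\<Sum>s=1..K. 1 / real s))" by simp
    also have "\<dots> \<le> real K * (\<alpha> / real K * (\<Sum>s=1..K. 1 / real s))"
      using cN alpha K0 by (intro mult_right_mono mult_nonneg_nonneg sum_nonneg) auto
    also have "\<dots> = \<alpha> * (\<Sum>s=1..K. 1 / real s)" using K0 by simp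
    finally show ?thesis using FDRW unfolding K_def by simp
  qed
  have part2: "(indep_vars (\<lambda>_. borel) P UNIV \<or> PRDN M N P) \<longrightarrow>
          FDR M N (\<lambda>\<omega>. BH \<alpha> (\<lambda>i. max (P i \<omega>) (if i \<notin> SP (\<lambda>j. Q j \<omega>) then 1 else 0)))
            \<le> \<alpha> * (1 + ln (1 / \<alpha>))"
  proof
    assume "indep_vars (\<lambda>_. borel) P UNIV \<or> PRDN M N P"
    then have prdn: "PRDN M N P" using indep_PRDN[of P N] P_meas by blast
    have "expectation W \<le> \<alpha> * Gf 1 1 (1 / \<alpha>)"
    proof (rule W_bound_general[OF Wm _ _ alpha(1)])
      fix b :: real assume b: "0 < b" "b \<le> 1"
      show "prob {\<omega>\<in>space M. b \<le> W \<omega>} \<le> gsum 1 (b / \<alpha>)"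
        unfolding W_def gsum_one using Wf_tail_prdn[OF P_meas P_valid prdn alpha b(1)] by simp
    qed (use W01 in auto)
    also have "Gf 1 1 (1 / \<alpha>) = 1 + ln (1 / \<alpha>)" using alpha by (intro Gf_one) simp
    finally show "FDR M N (\<lambda>\<omega>. BH \<alpha> (\<lambda>i. max (P i \<omega>) (if i \<notin> SP (\<lambda>j. Q j \<omega>) then 1 else 0)))
            \<le> \<alpha> * (1 + ln (1 / \<alpha>))" using FDRW by simp
  qed
  have part3: "WNDN M N P \<longrightarrow>
          FDR M N (\<lambda>\<omega>. BH \<alpha> (\<lambda>i. max (P i \<omega>) (if i \<notin> SP (\<lambda>j. Q j \<omega>) then 1 else 0)))
            \<le> \<alpha> * (3.18 + ln (1 / \<alpha>))"
  proof
    assume wndn: "WNDN M N P"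
    have "expectation W \<le> \<alpha> * Gf (10/3) K (1 / \<alpha>)"
    proof (rule W_bound_general[OF Wm _ _ alpha(1)])
      fix b :: real assume b: "0 < b" "b \<le> 1"
      have "prob {\<omega>\<in>space M. b \<le> W \<omega>} \<le> (\<Sum>k=1..K. (real k * \<alpha> / b) ^ k / fact k)"
        unfolding W_def K_def using Wf_tail_wndn[OF P_meas P_valid wndn alpha b(1)] by simp
      also have "\<dots> = gsum K (b / \<alpha>)" unfolding gsum_def using alpha by simp
      finally show "prob {\<omega>\<in>space M. b \<le> W \<omega>} \<le> gsum K (b / \<alpha>)" .
    qed (use W01 in auto)
    also have "\<dots> \<le> \<alpha> * (318/100 + ln (1 / \<alpha>))"
      using alpha by (intro mult_left_mono Gf_const) auto
    finally show "FDR M N (\<lambda>\<omega>. BH \<alpha> (\<lambda>i. max (P i \<omega>) (if i \<notin> SP (\<lambda>j. Q j \<omega>) then 1 else 0)))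
            \<le> \<alpha> * (3.18 + ln (1 / \<alpha>))" using FDRW by simp
  qed
  show ?thesis using part1 part2 part3 part4 by blast
qed

end
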